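(* Assume $\Delta=0$ and $2\mid pqr$. Let $\lambda_1,\lambda_2,\lambda_3\in K$ with $\lambda_ic_i\in N$, and let $s_i':=s_i\nu_i$, where $\nu_i\in N$ corresponds to $\lambda_ic_i$. Consider the relation $$(\mathcal{E})\qquad (4-\gamma)\lambda_1+(l+2)\lambda_2+(m+2)\lambda_3=-1.$$ (a) If $r=2r_1$, then $\big(s_1'(s_2's_3')^{r_1}\big)^2=1$ if and only if $(\mathcal{E})$ holds. If $q=2q_1$, then $\big(s_2'(s_3's_1')^{q_1}\big)^2=1$ if and only if $(\mathcal{E})$ holds. If $p=2p_1$, then $\big(s_3'(s_1's_2')^{p_1}\big)^2=1$ if and only if $(\mathcal{E})$ holds. (b) Consequently, if the exact sequence $1\to N\to G\to G/N\to 1$ splits (i.e. there is a homomorphism $\tau:G/N\to G$ with $\pi\circ\tau=\mathrm{id}$, $\pi:G\to G/N$ the projection), then there exist $\lambda_1,\lambda_2,\lambda_3\in K$ with $\lambda_ic_i\in N$ satisfying $(\mathcal{E})$ (namely those with $\tau(\pi(s_i))=s_i\nu_i$).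
   Context: Setting. Let $p,q,r\ge 3$ be integers and $W=W(p,q,r)$ the Coxeter group with generators $s_1,s_2,s_3$ and relations $s_i^2=1$, $(s_1s_2)^p=(s_1s_3)^q=(s_2s_3)^r=1$. Let $\alpha=4\cos^2(\pi k_1/p)$, $\beta=4\cos^2(\pi k_2/q)$, $\gamma=4\cos^2(\pi k_3/r)$ with $\gcd(k_1,p)=\gcd(k_2,q)=\gcd(k_3,r)=1$ (so $0<\alpha,\beta,\gamma<4$), and let $l,m\in\mathbb{C}$ with $lm=\gamma$. Let $K\subset\mathbb{C}$ be a field containing $\alpha,\beta,\gamma,l,m$, and $M$ a $3$-dimensional $K$-vector space with basis $(a_1,a_2,a_3)$. The reflection representation $R:W\to GL(M)$ with parameters $(\alpha,\beta,\gamma;l,m)$ is defined by: for $x=\lambda_1a_1+\lambda_2a_2+\lambda_3a_3$, $R(s_1)x=x-(2\lambda_1-\alpha\lambda_2-\beta\lambda_3)a_1$, $R(s_2)x=x-(-\lambda_1+2\lambda_2-l\lambda_3)a_2$, $R(s_3)x=x-(-\lambda_1-m\lambda_2+2\lambda_3)a_3$. Put $G=R(W)$ and write $s_i$ for $R(s_i)$. Let $\Delta=8-2\alpha-2\beta-2\gamma-(\alpha l+\beta m)$; $R$ is reducible iff $\Delta=0$. Reducible setting. Assume $\Delta=0$. Put $b=(4-\gamma)a_1+(l+2)a_2+(m+2)a_3$; then the space of $G$-fixed vectors is $C_M(G)=Kb$ and $(b,a_2,a_3)$ is a basis of $M$. Let $N=N(G)$ be the subgroup of elements of $G$ acting trivially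 on $M/C_M(G)$. Each $\zeta\in N$ satisfies $\zeta(b)=b$, $\zeta(a_2)=a_2+\lambda b$, $\zeta(a_3)=a_3+\mu b$ for a unique $(\lambda,\mu)\in K^2$; the map $\zeta\mapsto(\lambda,\mu)$ is an injective group homomorphism $N\to (K^2,+)$, through which $N$ is identified with an additive subgroup of $K^2$ (and written additively). Put $c_1=(\alpha,\beta)$, $c_2=(-2,l)$, $c_3=(m,-2)\in K^2$. *)

theory Defs
  imports "HOL-Analysis.Analysis" "HOL-Algebra.Coset"
begin

(* M = complex^3 with basis a_i = e i 1 (the field K is taken to be \<complex>) *)
definition e :: "3 \<Rightarrow> complex \<Rightarrow> complex^3" where
  "e i c = (\<chi> j. if j = i then c else 0)"

definition rs1 :: "complex \<Rightarrow> complex \<Rightarrow> complex^3 \<Rightarrow> complex^3" where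
  "rs1 \<alpha> \<beta> x = x - e 1 (2 * x$1 - \<alpha> * x$2 - \<beta> * x$3)"
definition rs2 :: "complex \<Rightarrow> complex^3 \<Rightarrow> complex^3" where
  "rs2 l x = x - e 2 (- x$1 + 2 * x$2 - l * x$3)"
definition rs3 :: "complex \<Rightarrow> complex^3 \<Rightarrow> complex^3" where
  "rs3 m x = x - e 3 (- x$1 - m * x$2 + 2 * x$3)"

(* G = R(W): the group generated by the three reflections (they are involutions,
   so the generated monoid is the generated group) *)
inductive_set Ggrp :: "complex \<Rightarrow> complex \<Rightarrow> complex \<Rightarrow> complex \<Rightarrow> (complex^3 \<Rightarrow> complex^3) set"
  for \<alpha> \<beta> l m where
  one: "id \<in> Ggrp \<alpha> \<beta> l m"
| mul1: "g \<in> Ggrp \<alpha> \<beta> l m \<Longrightarrow> g \<circ> rs1 \<alpha> \<beta> \<in> Ggrp \<alpha> \<beta> l m"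
| mul2: "g \<in> Ggrp \<alpha> \<beta> l m \<Longrightarrow> g \<circ> rs2 l \<in> Ggrp \<alpha> \<beta> l m"
| mul3: "g \<in> Ggrp \<alpha> \<beta> l m \<Longrightarrow> g \<circ> rs3 m \<in> Ggrp \<alpha> \<beta> l m"

definition Gstruct :: "(complex^3 \<Rightarrow> complex^3) set \<Rightarrow> (complex^3 \<Rightarrow> complex^3) monoid" where
  "Gstruct G = \<lparr>carrier = G, monoid.mult = (\<circ>), one = id\<rparr>"

definition fixed_vecs :: "(complex^3 \<Rightarrow> complex^3) set \<Rightarrow> (complex^3) set" where
  "fixed_vecs G = {x. \<forall>g\<in>G. g x = x}"

(* N(G): elements acting trivially on M / C_M(G) *)
definition Nsub :: "(complex^3 \<Rightarrow> complex^3) set \<Rightarrow> (complex^3 \<Rightarrow> complex^3) set" where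
  "Nsub G = {z \<in> G. \<forall>x. z x - x \<in> fixed_vecs G}"

definition corresp :: "complex^3 \<Rightarrow> (complex^3 \<Rightarrow> complex^3) \<Rightarrow> complex \<times> complex \<Rightarrow> bool" where
  "corresp b z v \<longleftrightarrow> z b = b \<and> z (e 2 1) = e 2 1 + fst v *s b \<and> z (e 3 1) = e 3 1 + snd v *s b"

definition psc :: "complex \<Rightarrow> complex \<times> complex \<Rightarrow> complex \<times> complex" where
  "psc t v = (t * fst v, t * snd v)"

end

theory Submission
  imports Defs
begin


definition refl :: "(complex^3 \<Rightarrow> complex) \<Rightarrow> complex^3 \<Rightarrow> complex^3 \<Rightarrow> complex^3" where
  "refl f a z = z - f z *s a"

definition linf :: "(complex^3 \<Rightarrow> complex) \<Rightarrow> bool" where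
  "linf f \<longleftrightarrow> (\<forall>x y. f (x + y) = f x + f y) \<and> (\<forall>c x. f (c *s x) = c * f x)"
definition linm :: "(complex^3 \<Rightarrow> complex^3) \<Rightarrow> bool" where
  "linm f \<longleftrightarrow> (\<forall>x y. f (x + y) = f x + f y) \<and> (\<forall>c x. f (c *s x) = c *s f x)"

lemma linf_add: "linf f \<Longrightarrow> f (x + y) = f x + f y" by (simp add: linf_def)
lemma linf_scale: "linf f \<Longrightarrow> f (c *s x) = c * f x" by (simp add: linf_def)
lemma linf_diff: "linf f \<Longrightarrow> f (x - y) = f x - f y"
  by (metis add_diff_cancel diff_add_cancel linf_add)
lemma linm_add: "linm f \<Longrightarrow> f (x + y) = f x + f y" by (simp add: linm_def)
lemma linm_scale: "linm f \<Longrightarrow> f (c *s x) = c *s f x" by (simp add: linm_def)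
lemma linm_diff: "linm f \<Longrightarrow> f (x - y) = f x - f y"
  by (metis add_diff_cancel diff_add_cancel linm_add)
lemma linm_neg: "linm f \<Longrightarrow> f (- x) = - f x"
  by (metis diff_0 linm_diff diff_self)

lemma linm_comp: "linm f \<Longrightarrow> linm g \<Longrightarrow> linm (f \<circ> g)"
  by (simp add: linm_def)
lemma linm_id: "linm id" by (simp add: linm_def)
lemma linm_pow: "linm f \<Longrightarrow> linm (f ^^ n)"
  by (induction n) (auto simp: linm_id linm_comp simp del: comp_apply)

lemma linm_refl: "linf f \<Longrightarrow> linm (refl f a)"
  unfolding linm_def refl_def by (auto simp: linf_add linf_scale vec_eq_iff algebra_simps)

lemma test: "(e 2 c) $ 1 = 0 \<and> (e 2 c) $ 3 = 0 \<and> e 2 c $ 2 = c"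
  by (simp add: e_def)


lemma funpow_add_lin: "linm T \<Longrightarrow> (T ^^ n) (x + y) = (T ^^ n) x + (T ^^ n) y"
  using linm_pow linm_add by blast

lemma eig_pow: "linm T \<Longrightarrow> T v = w *s v \<Longrightarrow> (T ^^ n) v = (w ^ n) *s v"
  by (induction n) (auto simp: linm_scale vector_smult_assoc mult.commute)

lemma eigen_pow:
  fixes T :: "complex^3 \<Rightarrow> complex^3"
  assumes T: "linm T" and TT: "T (T v) = \<sigma> *s T v - v" and sg: "\<sigma> = \<omega> + inverse \<omega>"
    and w2: "\<omega>^2 \<noteq> 1" and wN: "\<omega> ^ N = -1"
  shows "(T ^^ N) v = - v"
proof -
  have w0: "\<omega> \<noteq> 0" using wN by (cases N) auto
  define d where "d = \<omega> - inverse \<omega>"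
  have d0: "d \<noteq> 0" using w2 w0 unfolding d_def by (auto simp: field_simps power2_eq_square)
  define vp where "vp = (1/d) *s (T v - inverse \<omega> *s v)"
  define vm where "vm = (1/d) *s (\<omega> *s v - T v)"
  have vsi: "v $ i = vp $ i + vm $ i" for i
  proof -
    have "vp $ i + vm $ i = (1/d) * (d * v $ i)"
      unfolding vp_def vm_def d_def by (simp add: algebra_simps)
    thus ?thesis using d0 by simp
  qed
  have vsum: "v = vp + vm" using vsi by (simp add: vec_eq_iff)
  have Tvp: "T vp = \<omega> *s vp" unfolding vp_def
    using d0 w0 by (simp add: linm_scale[OF T] linm_diff[OF T] TT sg vec_eq_iff field_simps)
  have Tvm: "T vm = inverse \<omega> *s vm" unfolding vm_def
    using d0 w0 by (simp add: linm_scale[OF T] linm_diff[OF T] TT sg vec_eq_iff field_simps)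
  have "(T ^^ N) v = (T ^^ N) vp + (T ^^ N) vm" using vsum funpow_add_lin[OF T] by metis
  also have "\<dots> = (\<omega>^N) *s vp + (inverse \<omega> ^ N) *s vm" using eig_pow[OF T Tvp] eig_pow[OF T Tvm] by simp
  also have "\<dots> = - v" using wN vsum by (simp add: power_inverse vec_eq_iff)
  finally show ?thesis .
qed


lemma Tform:
  assumes f2: "linf f2" and f3: "linf f3" and "f2 A2 = 2" "f3 A3 = 2" "f2 A3 = -x" "f3 A2 = -y"
  shows "(refl f2 A2 \<circ> refl f3 A3) (a *s A2 + c *s A3) = (x*y*a - x*c - a) *s A2 + (a*y - c) *s A3"
  using assms by (simp add: refl_def linf_add[OF f2] linf_add[OF f3] linf_scale[OF f2] linf_scale[OF f3]
      linf_diff[OF f2] vec_eq_iff algebra_simps)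

lemma dihedral:
  assumes f2: "linf f2" and f3: "linf f3" and c22: "f2 A2 = 2" and c33: "f3 A3 = 2"
    and c23: "f2 A3 = -x" and c32: "f3 A2 = -y"
    and sg: "x*y - 2 = \<omega> + inverse \<omega>" and w2: "\<omega>^2 \<noteq> 1" and wN: "\<omega> ^ N = -1"
    and P: "P = (\<lambda>z. ((2*f2 z + x*f3 z)/(4 - x*y)) *s A2 + ((y*f2 z + 2*f3 z)/(4 - x*y)) *s A3)"
  shows "4 - x*y \<noteq> 0" and "(refl f2 A2 \<circ> refl f3 A3) ^^ N = (\<lambda>z. z - 2 *s P z)"
proof -
  have w0: "\<omega> \<noteq> 0" using wN by (cases N) auto
  have w1: "\<omega> \<noteq> 1" using w2 by auto
  have "4 - x*y = - ((\<omega> - 1)^2 / \<omega>)" using sg w0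
    by (simp add: field_simps power2_eq_square)
  thus D0: "4 - x*y \<noteq> 0" using w0 w1 by simp
  define T where "T = refl f2 A2 \<circ> refl f3 A3"
  have T: "linm T" unfolding T_def by (intro linm_comp linm_refl f2 f3)
  have TF: "T (a *s A2 + c *s A3) = (x*y*a - x*c - a) *s A2 + (a*y - c) *s A3" for a c
    unfolding T_def by (rule Tform[OF f2 f3 c22 c33 c23 c32])
  have TT: "T (T (a *s A2 + c *s A3)) = (x*y-2) *s T (a *s A2 + c *s A3) - (a *s A2 + c *s A3)" for a c
    unfolding TF by (simp add: vec_eq_iff algebra_simps)
  show "T ^^ N = (\<lambda>z. z - 2 *s P z)"
  proof
    fix z
    define a where "a = (2*f2 z + x*f3 z)/(4 - x*y)"
    define c where "c = (y*f2 z + 2*f3 z)/(4 - x*y)"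
    have Pz: "P z = a *s A2 + c *s A3" unfolding P a_def c_def by simp
    define u where "u = z - P z"
    have e2: "2*a - x*c = f2 z"
    proof -
      have "2*a - x*c = ((4 - x*y) * f2 z)/(4 - x*y)" unfolding a_def c_def
        by (simp add: diff_divide_distrib[symmetric] add_divide_distrib[symmetric] algebra_simps)
      thus ?thesis using D0 by simp
    qed
    have e3: "-y*a + 2*c = f3 z"
    proof -
      have "-y*a + 2*c = ((4 - x*y) * f3 z)/(4 - x*y)" unfolding a_def c_def
        by (simp add: add_divide_distrib[symmetric] algebra_simps)
      thus ?thesis using D0 by simp
    qed
    have "f2 u = 0" unfolding u_def Pz using e2 c22 c23
      by (simp add: linf_diff[OF f2] linf_add[OF f2] linf_scale[OF f2] algebra_simps)
    moreover have "f3 u = 0" unfolding u_def Pz using e3 c33 c32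
      by (simp add: linf_diff[OF f3] linf_add[OF f3] linf_scale[OF f3] algebra_simps)
    ultimately have Tu: "T u = u" unfolding T_def by (simp add: refl_def)
    have TNu: "(T ^^ n) u = u" for n by (induction n) (simp_all add: Tu)
    have TNv: "(T ^^ N) (P z) = - P z" unfolding Pz
      by (rule eigen_pow[OF T TT sg w2 wN])
    have "(T ^^ N) z = (T ^^ N) u + (T ^^ N) (P z)" unfolding u_def
      using funpow_add_lin[OF T, of N "z - P z" "P z"] by simp
    also have "\<dots> = z - 2 *s P z" using TNu TNv unfolding u_def by (simp add: vec_eq_iff)
    finally show "(T ^^ N) z = z - 2 *s P z" .
  qed
qed


lemma mainw:
  assumes f1: "linf f1" and f2: "linf f2" and f3: "linf f3" and c11: "f1 A1 = 2"
    and c22: "f2 A2 = 2" and c33: "f3 A3 = 2"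
    and c23: "f2 A3 = -x" and c32: "f3 A2 = -y"
    and sg: "x*y - 2 = \<omega> + inverse \<omega>" and w2: "\<omega>^2 \<noteq> 1" and wN: "\<omega> ^ N = -1"
    and B1: "f1 B = 0" and B2: "f2 B = 0" and B3: "f3 B = 0"
    and K1: "\<And>u. f2 u = 0 \<Longrightarrow> f3 u = 0 \<Longrightarrow> f1 u = 0"
    and rel: "\<rho>1 *s A1 + \<rho>2 *s A2 + \<rho>3 *s A3 = \<sigma> *s B" and r1: "\<rho>1 \<noteq> 0"
  shows "((refl f1 A1 \<circ> (refl f2 A2 \<circ> refl f3 A3) ^^ N) ^^ 2) z = z + (2 * (\<sigma>/\<rho>1) * f1 z) *s B"
proof -
  define P where "P = (\<lambda>z. ((2*f2 z + x*f3 z)/(4 - x*y)) *s A2 + ((y*f2 z + 2*f3 z)/(4 - x*y)) *s A3)"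
  note dh = dihedral[OF f2 f3 c22 c33 c23 c32 sg w2 wN P_def]
  have D0: "4 - x*y \<noteq> 0" by (rule dh(1))
  have QN: "(refl f2 A2 \<circ> refl f3 A3) ^^ N = (\<lambda>z. z - 2 *s P z)" by (rule dh(2))
  have Pa: "P (u + v) = P u + P v" for u v unfolding P_def
    by (simp add: linf_add[OF f2] linf_add[OF f3] vec_eq_iff add_divide_distrib algebra_simps)
  have Ps: "P (c *s u) = c *s P u" for c u unfolding P_def
    by (simp add: linf_scale[OF f2] linf_scale[OF f3] vec_eq_iff algebra_simps)
  have Pd: "P (u - v) = P u - P v" for u v by (metis Pa add_diff_cancel diff_add_cancel)
  have fP2: "f2 (P u) = f2 u" for u
  proof -
    have "f2 (P u) = ((4 - x*y) * f2 u)/(4 - x*y)" unfolding P_def using c22 c23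
      by (simp add: linf_add[OF f2] linf_scale[OF f2] diff_divide_distrib[symmetric] add_divide_distrib[symmetric] algebra_simps)
    thus ?thesis using D0 by simp
  qed
  have fP3: "f3 (P u) = f3 u" for u
  proof -
    have "f3 (P u) = ((4 - x*y) * f3 u)/(4 - x*y)" unfolding P_def using c33 c32
      by (simp add: linf_add[OF f3] linf_scale[OF f3] diff_divide_distrib[symmetric] add_divide_distrib[symmetric] algebra_simps)
    thus ?thesis using D0 by simp
  qed
  have PP: "P (P u) = P u" for u
  proof -
    have "P (P u) = ((2*f2 (P u) + x*f3 (P u))/(4 - x*y)) *s A2 + ((y*f2 (P u) + 2*f3 (P u))/(4 - x*y)) *s A3"
      by (simp only: P_def)
    also have "\<dots> = P u" unfolding fP2 fP3 by (simp add: P_def)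
    finally show ?thesis .
  qed
  have PA2: "P A2 = A2"
  proof -
    have "(2*f2 A2 + x*f3 A2)/(4 - x*y) = 1" "(y*f2 A2 + 2*f3 A2)/(4 - x*y) = 0"
      using D0 c22 c32 by (auto simp: field_simps)
    thus ?thesis unfolding P_def by (simp add: vec_eq_iff)
  qed
  have PA3: "P A3 = A3"
  proof -
    have "(2*f2 A3 + x*f3 A3)/(4 - x*y) = 0" "(y*f2 A3 + 2*f3 A3)/(4 - x*y) = 1"
      using D0 c33 c23 by (auto simp: field_simps)
    thus ?thesis unfolding P_def by (simp add: vec_eq_iff)
  qed
  have PB: "P B = 0" unfolding P_def using B2 B3 by (simp add: vec_eq_iff)
  have fP1: "f1 (P u) = f1 u" for u
  proof -
    have "f2 (u - P u) = 0" "f3 (u - P u) = 0"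
      by (simp_all add: linf_diff[OF f2] linf_diff[OF f3] fP2 fP3)
    hence "f1 (u - P u) = 0" by (rule K1)
    thus ?thesis by (simp add: linf_diff[OF f1])
  qed
  have "\<rho>1 *s A1 = \<sigma> *s B - \<rho>2 *s A2 - \<rho>3 *s A3" using rel by (simp add: vec_eq_iff algebra_simps)
  hence "\<rho>1 *s P A1 = - (\<rho>2 *s A2) - \<rho>3 *s A3"
    by (metis Ps Pd PA2 PA3 PB diff_0 vector_smult_rzero)
  hence "\<rho>1 *s P A1 = \<rho>1 *s A1 - \<sigma> *s B"
  proof -
    assume h: "\<rho>1 *s P A1 = - (\<rho>2 *s A2) - \<rho>3 *s A3"
    have "(\<rho>1 *s P A1 - (\<rho>1 *s A1 - \<sigma> *s B)) = (\<rho>1 *s P A1 - (- (\<rho>2 *s A2) - \<rho>3 *s A3)) - (\<rho>1 *s A1 + \<rho>2 *s A2 + \<rho>3 *s A3 - \<sigma> *s B)"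
      by (simp add: vec_eq_iff algebra_simps)
    also have "\<dots> = 0" using h rel by simp
    finally show ?thesis by simp
  qed
  hence PA1: "P A1 = A1 - (\<sigma>/\<rho>1) *s B" using r1
    by (simp add: vec_eq_iff field_simps)
  define \<kappa> where "\<kappa> = \<sigma>/\<rho>1"
  define y where "y = z - 2 *s P z"
  have Py: "P y = - P z" unfolding y_def by (simp add: Pd Ps PP vec_eq_iff)
  have f1y: "f1 y = - f1 z" unfolding y_def by (simp add: linf_diff[OF f1] linf_scale[OF f1] fP1)
  have sy: "refl f1 A1 y = z - 2 *s P z + f1 z *s A1"
    unfolding refl_def f1y by (simp add: y_def vec_eq_iff)
  have "P (refl f1 A1 y) = P y - f1 y *s P A1" by (simp add: refl_def Pd Ps)
  hence Psy: "P (refl f1 A1 y) = - P z + f1 z *s (A1 - \<kappa> *s B)"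
    unfolding Py f1y PA1 \<kappa>_def by (simp add: vec_eq_iff)
  have r0: "refl f1 A1 y - 2 *s P (refl f1 A1 y) = z - f1 z *s A1 + (2 * \<kappa> * f1 z) *s B"
    unfolding Psy unfolding sy by (simp add: vec_eq_iff algebra_simps)
  have r: "(\<lambda>z. z - 2 *s P z) (refl f1 A1 y) = z - f1 z *s A1 + (2 * \<kappa> * f1 z) *s B"
    using r0 by simp
  have f1r: "f1 (z - f1 z *s A1 + (2 * \<kappa> * f1 z) *s B) = - f1 z"
    by (simp add: linf_diff[OF f1] linf_add[OF f1] linf_scale[OF f1] c11 B1)
  have fin: "refl f1 A1 (z - f1 z *s A1 + (2 * \<kappa> * f1 z) *s B) = z + (2*(\<sigma>/\<rho>1)*f1 z) *s B"
    unfolding refl_def f1r by (simp add: \<kappa>_def vec_eq_iff algebra_simps)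
  show ?thesis unfolding QN numeral_2_eq_2
    apply (simp only: funpow.simps comp_apply id_apply)
    unfolding y_def[symmetric] r fin by (rule refl)
qed


lemma omega_facts:
  fixes n :: nat and k :: int
  assumes n3: "n \<ge> 3" and cop: "coprime k (int n)"
  defines "\<omega> \<equiv> cis (2 * pi * real_of_int k / real n)"
  shows "\<omega>^2 \<noteq> 1"
    and "complex_of_real (4 * (cos (pi * real_of_int k / real n))^2) = 2 + \<omega> + inverse \<omega>"
    and "\<And>h. n = 2 * h \<Longrightarrow> \<omega> ^ h = -1"
proof -
  have n0: "real n > 0" using n3 by simp
  show "\<omega>^2 \<noteq> 1"
  proof
    assume a: "\<omega>^2 = 1"
    have "\<omega>^2 = cis (real 2 * (2 * pi * real_of_int k / real n))" unfolding \<omega>_def by (rule Complex.DeMoivre)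
    hence "cis (4 * pi * real_of_int k / real n) = 1" using a
      by (simp add: algebra_simps)
    hence "cos (4 * pi * real_of_int k / real n) = 1" by (metis cis.sel(1) one_complex.sel(1))
    then obtain j :: int where j: "4 * pi * real_of_int k / real n = real_of_int j * 2 * pi"
      using cos_one_2pi_int by blast
    hence "real_of_int (2 * k) = real_of_int (j * int n)" using n0
      by (simp add: field_simps)
    hence "2 * k = j * int n" by linarith
    hence "int n dvd 2 * k" by simp
    hence "int n dvd 2" using cop by (metis coprime_commute coprime_dvd_mult_left_iff)
    hence "int n \<le> 2" by (rule zdvd_imp_le) simp
    thus False using n3 by simp
  qed
  have c2: "cos (2 * (pi * real_of_int k / real n)) = 2 * cos (pi * real_of_int k / real n) ^ 2 - 1"
    by (rule cos_double_cos)
  have "\<omega> + inverse \<omega> = complex_of_real (2 * cos (2 * pi * real_of_int k / real n))"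
    unfolding \<omega>_def cis_inverse by (simp add: complex_eq_iff)
  moreover have "4 * (cos (pi * real_of_int k / real n))^2 = 2 + 2 * cos (2 * pi * real_of_int k / real n)"
    using c2 by (simp add: mult.assoc times_divide_eq_right)
  ultimately show "complex_of_real (4 * (cos (pi * real_of_int k / real n))^2) = 2 + \<omega> + inverse \<omega>"
    by simp
  fix h assume nh: "n = 2 * h"
  have "odd k"
  proof
    assume "even k"
    hence "2 dvd gcd k (int n)" using nh by simp
    thus False using cop by simp
  qed
  then obtain j where kj: "k = 2 * j + 1" by (metis oddE)
  have h0: "real h > 0" using nh n3 by simp
  have "\<omega> ^ h = cis (real h * (2 * pi * real_of_int k / real n))" unfolding \<omega>_def by (rule Complex.DeMoivre)
  also have "real h * (2 * pi * real_of_int k / real n) = 2 * pi * real_of_int j + pi"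
    using nh h0 kj by (simp add: field_simps)
  also have "cis (2 * pi * real_of_int j + pi) = -1"
    by (simp add: cis_mult[symmetric])
  finally show "\<omega> ^ h = -1" .
qed


definition F1 :: "complex \<Rightarrow> complex \<Rightarrow> complex^3 \<Rightarrow> complex" where
  "F1 \<alpha> \<beta> z = 2 * z$1 - \<alpha> * z$2 - \<beta> * z$3"
definition F2 :: "complex \<Rightarrow> complex^3 \<Rightarrow> complex" where
  "F2 l z = - z$1 + 2 * z$2 - l * z$3"
definition F3 :: "complex \<Rightarrow> complex^3 \<Rightarrow> complex" where
  "F3 m z = - z$1 - m * z$2 + 2 * z$3"

lemma linF1: "linf (F1 \<alpha> \<beta>)" by (simp add: linf_def F1_def algebra_simps)
lemma linF2: "linf (F2 l)" by (simp add: linf_def F2_def algebra_simps)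
lemma linF3: "linf (F3 m)" by (simp add: linf_def F3_def algebra_simps)

lemma e_scale: "e i c = c *s e i 1" by (simp add: e_def vec_eq_iff)

lemma rs1_refl: "rs1 \<alpha> \<beta> = refl (F1 \<alpha> \<beta>) (e 1 1)"
  by (rule ext) (simp add: rs1_def refl_def F1_def e_def vec_eq_iff)
lemma rs2_refl: "rs2 l = refl (F2 l) (e 2 1)"
  by (rule ext) (simp add: rs2_def refl_def F2_def e_def vec_eq_iff)
lemma rs3_refl: "rs3 m = refl (F3 m) (e 3 1)"
  by (rule ext) (simp add: rs3_def refl_def F3_def e_def vec_eq_iff)

lemma Ggrp_lin: "g \<in> Ggrp \<alpha> \<beta> l m \<Longrightarrow> linm g"
  by (induction rule: Ggrp.induct)
     (simp_all only: linm_id rs1_refl rs2_refl rs3_refl linm_comp linm_refl linF1 linF2 linF3)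

lemma Fe: "F1 \<alpha> \<beta> (e 1 1) = 2" "F1 \<alpha> \<beta> (e 2 1) = -\<alpha>" "F1 \<alpha> \<beta> (e 3 1) = -\<beta>"
  "F2 l (e 1 1) = -1" "F2 l (e 2 1) = 2" "F2 l (e 3 1) = -l"
  "F3 m (e 1 1) = -1" "F3 m (e 2 1) = -m" "F3 m (e 3 1) = 2"
  by (simp_all add: F1_def F2_def F3_def e_def)

definition bv :: "complex \<Rightarrow> complex \<Rightarrow> complex \<Rightarrow> complex^3" where
  "bv \<gamma> l m = e 1 (4 - \<gamma>) + e 2 (l + 2) + e 3 (m + 2)"

locale setting =
  fixes \<alpha> \<beta> \<gamma> l m :: complex
  assumes lm: "l * m = \<gamma>" and Dl: "8 - 2*\<alpha> - 2*\<beta> - 2*\<gamma> - (\<alpha> * l + \<beta> * m) = 0"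
begin

lemma Fb: "F1 \<alpha> \<beta> (bv \<gamma> l m) = 0" "F2 l (bv \<gamma> l m) = 0" "F3 m (bv \<gamma> l m) = 0"
proof -
  show "F1 \<alpha> \<beta> (bv \<gamma> l m) = 0" using Dl by (simp add: F1_def bv_def e_def algebra_simps)
  show "F2 l (bv \<gamma> l m) = 0" using lm by (simp add: F2_def bv_def e_def algebra_simps)
  show "F3 m (bv \<gamma> l m) = 0" using lm by (simp add: F3_def bv_def e_def algebra_simps)
qed

lemma I2: "(2+l) * F1 \<alpha> \<beta> u + (4-\<beta>) * F2 l u + (2*l+\<beta>) * F3 m u = 0"
proof -
  have "(2+l) * F1 \<alpha> \<beta> u + (4-\<beta>) * F2 l u + (2*l+\<beta>) * F3 m u
      = (8 - 2*\<alpha> - 2*\<beta> - 2*(l*m) - (\<alpha> * l + \<beta> * m)) * u$2"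
    by (simp add: F1_def F2_def F3_def algebra_simps)
  thus ?thesis using Dl lm by simp
qed

lemma I3: "(2+m) * F1 \<alpha> \<beta> u + (2*m+\<alpha>) * F2 l u + (4-\<alpha>) * F3 m u = 0"
proof -
  have "(2+m) * F1 \<alpha> \<beta> u + (2*m+\<alpha>) * F2 l u + (4-\<alpha>) * F3 m u
      = (8 - 2*\<alpha> - 2*\<beta> - 2*(l*m) - (\<alpha> * l + \<beta> * m)) * u$3"
    by (simp add: F1_def F2_def F3_def algebra_simps)
  thus ?thesis using Dl lm by simp
qed

lemma relA:
  "(4-\<gamma>) *s (e 1 1 + t1 *s bv \<gamma> l m) + (l+2) *s (e 2 1 + t2 *s bv \<gamma> l m) + (m+2) *s (e 3 1 + t3 *s bv \<gamma> l m)
   = (1 + ((4 - \<gamma>) * t1 + (l + 2) * t2 + (m + 2) * t3)) *s bv \<gamma> l m"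
  by (simp add: bv_def e_def vec_eq_iff algebra_simps)

end




lemma finish:
  fixes W :: "complex^3 \<Rightarrow> complex^3" and f :: "complex^3 \<Rightarrow> complex"
  assumes W: "\<And>z. W z = z + (2 * (\<sigma>/\<rho>) * f z) *s B" and fA: "f A = 2" and B0: "B \<noteq> 0" and r0: "\<rho> \<noteq> 0"
  shows "W = id \<longleftrightarrow> \<sigma> = 0"
proof
  assume "W = id"
  hence "W A = A" by simp
  hence "(4 * (\<sigma>/\<rho>)) *s B = 0" using W[of A] fA by (simp add: vec_eq_iff)
  thus "\<sigma> = 0" using B0 r0 by (auto simp: vec_eq_iff)
next
  assume "\<sigma> = 0" thus "W = id" using W by (simp add: fun_eq_iff vec_eq_iff)
qed

definition Av :: "complex \<Rightarrow> complex \<Rightarrow> complex \<Rightarrow> 3 \<Rightarrow> complex \<Rightarrow> complex^3" where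
  "Av g l' m' i t = e i 1 + t *s bv g l' m'"

context setting
begin

lemma FA: "F1 \<alpha> \<beta> (x + t *s bv \<gamma> l m) = F1 \<alpha> \<beta> x" "F2 l (x + t *s bv \<gamma> l m) = F2 l x"
  "F3 m (x + t *s bv \<gamma> l m) = F3 m x"
  by (simp_all add: linf_add[OF linF1] linf_scale[OF linF1] linf_add[OF linF2] linf_scale[OF linF2]
      linf_add[OF linF3] linf_scale[OF linF3] Fb)

lemma bv0: "4 - \<gamma> \<noteq> 0 \<Longrightarrow> bv \<gamma> l m \<noteq> 0"
  by (simp add: bv_def e_def vec_eq_iff) (metis (no_types) one_neq_zero)

lemma caseR:
  assumes g4: "4 - \<gamma> \<noteq> 0" and m2: "m + 2 \<noteq> 0"
    and sg: "\<gamma> = 2 + \<omega> + inverse \<omega>" and w2: "\<omega>^2 \<noteq> 1" and wN: "\<omega>^N = -1"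
  shows "(((refl (F1 \<alpha> \<beta>) (Av \<gamma> l m 1 t1) \<circ> (refl (F2 l) (Av \<gamma> l m 2 t2)
            \<circ> refl (F3 m) (Av \<gamma> l m 3 t3)) ^^ N) ^^ 2) = id)
         \<longleftrightarrow> (4 - \<gamma>) * t1 + (l + 2) * t2 + (m + 2) * t3 = -1"
proof -
  have K1: "F1 \<alpha> \<beta> u = 0" if "F2 l u = 0" "F3 m u = 0" for u
    using I3[of u] that m2 by (simp add: add.commute)
  have sg': "l * m - 2 = \<omega> + inverse \<omega>" using sg lm by simp
  note mw = mainw[of "F1 \<alpha> \<beta>" "F2 l" "F3 m" "Av \<gamma> l m 1 t1" "Av \<gamma> l m 2 t2" "Av \<gamma> l m 3 t3"
     l m \<omega> N "bv \<gamma> l m" "4 - \<gamma>" "l + 2" "m + 2", unfolded Av_def,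
     OF linF1 linF2 linF3 _ _ _ _ _ sg' w2 wN _ _ _ K1 relA g4, folded Av_def]
  have "(((refl (F1 \<alpha> \<beta>) (Av \<gamma> l m 1 t1) \<circ> (refl (F2 l) (Av \<gamma> l m 2 t2)
            \<circ> refl (F3 m) (Av \<gamma> l m 3 t3)) ^^ N) ^^ 2) = id)
         \<longleftrightarrow> (1 + ((4 - \<gamma>) * t1 + (l + 2) * t2 + (m + 2) * t3)) = 0"
    by (rule finish[OF mw _ bv0[OF g4] g4, of "Av \<gamma> l m 1 t1"]) (simp_all add: Av_def FA Fe Fb)
  thus ?thesis by (simp add: add_eq_0_iff add.commute)
qed


lemma caseQ:
  assumes g4: "4 - \<gamma> \<noteq> 0" and l2: "l + 2 \<noteq> 0" and b4: "4 - \<beta> \<noteq> 0"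
    and sg: "\<beta> = 2 + \<omega> + inverse \<omega>" and w2: "\<omega>^2 \<noteq> 1" and wN: "\<omega>^N = -1"
  shows "(((refl (F2 l) (Av \<gamma> l m 2 t2) \<circ> (refl (F3 m) (Av \<gamma> l m 3 t3)
            \<circ> refl (F1 \<alpha> \<beta>) (Av \<gamma> l m 1 t1)) ^^ N) ^^ 2) = id)
         \<longleftrightarrow> (4 - \<gamma>) * t1 + (l + 2) * t2 + (m + 2) * t3 = -1"
proof -
  have K1: "F2 l u = 0" if "F3 m u = 0" "F1 \<alpha> \<beta> u = 0" for u
    using I2[of u] that b4 by simp
  have sg': "1 * \<beta> - 2 = \<omega> + inverse \<omega>" using sg by simp
  have rel: "(l+2) *s (Av \<gamma> l m 2 t2) + (m+2) *s (Av \<gamma> l m 3 t3) + (4-\<gamma>) *s (Av \<gamma> l m 1 t1)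
     = (1 + ((4 - \<gamma>) * t1 + (l + 2) * t2 + (m + 2) * t3)) *s bv \<gamma> l m"
    using relA[of t1 t2 t3] unfolding Av_def by (simp add: algebra_simps)
  note mw = mainw[of "F2 l" "F3 m" "F1 \<alpha> \<beta>" "Av \<gamma> l m 2 t2" "Av \<gamma> l m 3 t3" "Av \<gamma> l m 1 t1"
     1 \<beta> \<omega> N "bv \<gamma> l m" "l + 2" "m + 2" "4 - \<gamma>",
     OF linF2 linF3 linF1 _ _ _ _ _ sg' w2 wN _ _ _ K1 rel l2]
  have "(((refl (F2 l) (Av \<gamma> l m 2 t2) \<circ> (refl (F3 m) (Av \<gamma> l m 3 t3)
            \<circ> refl (F1 \<alpha> \<beta>) (Av \<gamma> l m 1 t1)) ^^ N) ^^ 2) = id)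
         \<longleftrightarrow> (1 + ((4 - \<gamma>) * t1 + (l + 2) * t2 + (m + 2) * t3)) = 0"
    by (rule finish[OF mw _ bv0[OF g4] l2, of "Av \<gamma> l m 2 t2"]) (simp_all add: Av_def FA Fe Fb)
  thus ?thesis by (simp add: add_eq_0_iff add.commute)
qed

lemma caseP:
  assumes g4: "4 - \<gamma> \<noteq> 0" and m2: "m + 2 \<noteq> 0" and a4: "4 - \<alpha> \<noteq> 0"
    and sg: "\<alpha> = 2 + \<omega> + inverse \<omega>" and w2: "\<omega>^2 \<noteq> 1" and wN: "\<omega>^N = -1"
  shows "(((refl (F3 m) (Av \<gamma> l m 3 t3) \<circ> (refl (F1 \<alpha> \<beta>) (Av \<gamma> l m 1 t1)
            \<circ> refl (F2 l) (Av \<gamma> l m 2 t2)) ^^ N) ^^ 2) = id)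
         \<longleftrightarrow> (4 - \<gamma>) * t1 + (l + 2) * t2 + (m + 2) * t3 = -1"
proof -
  have K1: "F3 m u = 0" if "F1 \<alpha> \<beta> u = 0" "F2 l u = 0" for u
    using I3[of u] that a4 by simp
  have sg': "\<alpha> * 1 - 2 = \<omega> + inverse \<omega>" using sg by simp
  have rel: "(m+2) *s (Av \<gamma> l m 3 t3) + (4-\<gamma>) *s (Av \<gamma> l m 1 t1) + (l+2) *s (Av \<gamma> l m 2 t2)
     = (1 + ((4 - \<gamma>) * t1 + (l + 2) * t2 + (m + 2) * t3)) *s bv \<gamma> l m"
    using relA[of t1 t2 t3] unfolding Av_def by (simp add: algebra_simps)
  note mw = mainw[of "F3 m" "F1 \<alpha> \<beta>" "F2 l" "Av \<gamma> l m 3 t3" "Av \<gamma> l m 1 t1" "Av \<gamma> l m 2 t2"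
     \<alpha> 1 \<omega> N "bv \<gamma> l m" "m + 2" "4 - \<gamma>" "l + 2",
     OF linF3 linF1 linF2 _ _ _ _ _ sg' w2 wN _ _ _ K1 rel m2]
  have "(((refl (F3 m) (Av \<gamma> l m 3 t3) \<circ> (refl (F1 \<alpha> \<beta>) (Av \<gamma> l m 1 t1)
            \<circ> refl (F2 l) (Av \<gamma> l m 2 t2)) ^^ N) ^^ 2) = id)
         \<longleftrightarrow> (1 + ((4 - \<gamma>) * t1 + (l + 2) * t2 + (m + 2) * t3)) = 0"
    by (rule finish[OF mw _ bv0[OF g4] m2, of "Av \<gamma> l m 3 t3"]) (simp_all add: Av_def FA Fe Fb)
  thus ?thesis by (simp add: add_eq_0_iff add.commute)
qed

end


lemma G_mul: "h \<in> Ggrp \<alpha> \<beta> l m \<Longrightarrow> g \<in> Ggrp \<alpha> \<beta> l m \<Longrightarrow> g \<circ> h \<in> Ggrp \<alpha> \<beta> l m"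
proof (induction h rule: Ggrp.induct)
  case one thus ?case by simp
next
  case (mul1 h) thus ?case using Ggrp.mul1[of "g \<circ> h"] by (metis comp_assoc)
next
  case (mul2 h) thus ?case using Ggrp.mul2[of "g \<circ> h"] by (metis comp_assoc)
next
  case (mul3 h) thus ?case using Ggrp.mul3[of "g \<circ> h"] by (metis comp_assoc)
qed

lemma G_gens: "rs1 \<alpha> \<beta> \<in> Ggrp \<alpha> \<beta> l m" "rs2 l \<in> Ggrp \<alpha> \<beta> l m" "rs3 m \<in> Ggrp \<alpha> \<beta> l m"
  using Ggrp.mul1[OF Ggrp.one] Ggrp.mul2[OF Ggrp.one] Ggrp.mul3[OF Ggrp.one] by simp_all

lemma refl_invol: "linf f \<Longrightarrow> f a = 2 \<Longrightarrow> refl f a \<circ> refl f a = id"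
  by (rule ext) (simp add: refl_def linf_diff linf_scale vec_eq_iff algebra_simps)

lemma rs_invol: "rs1 \<alpha> \<beta> \<circ> rs1 \<alpha> \<beta> = id" "rs2 l \<circ> rs2 l = id" "rs3 m \<circ> rs3 m = id"
  by (simp_all add: rs1_refl rs2_refl rs3_refl refl_invol linF1 linF2 linF3 Fe)

lemma G_pow: "g \<in> Ggrp \<alpha> \<beta> l m \<Longrightarrow> g ^^ n \<in> Ggrp \<alpha> \<beta> l m"
  by (induction n) (simp_all only: funpow.simps Ggrp.one G_mul)

lemma G_inv: "g \<in> Ggrp \<alpha> \<beta> l m \<Longrightarrow> \<exists>h \<in> Ggrp \<alpha> \<beta> l m. h \<circ> g = id \<and> g \<circ> h = id"
proof (induction g rule: Ggrp.induct)
  case one show ?case by (rule bexI[of _ id]) (simp_all only: id_comp Ggrp.one)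
next
  case (mul1 g)
  then obtain h where h: "h \<in> Ggrp \<alpha> \<beta> l m" "h \<circ> g = id" "g \<circ> h = id" by blast
  have "rs1 \<alpha> \<beta> \<circ> h \<in> Ggrp \<alpha> \<beta> l m" by (rule G_mul[OF h(1) G_gens(1)])
  moreover have "(rs1 \<alpha> \<beta> \<circ> h) \<circ> (g \<circ> rs1 \<alpha> \<beta>) = id"
    by (metis comp_assoc h(2) id_comp rs_invol(1))
  moreover have "(g \<circ> rs1 \<alpha> \<beta>) \<circ> (rs1 \<alpha> \<beta> \<circ> h) = id"
    by (metis comp_assoc h(3) id_comp rs_invol(1))
  ultimately show ?case by blast
next
  case (mul2 g)
  then obtain h where h: "h \<in> Ggrp \<alpha> \<beta> l m" "h \<circ> g = id" "g \<circ> h = id" by blast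
  have "rs2 l \<circ> h \<in> Ggrp \<alpha> \<beta> l m" by (rule G_mul[OF h(1) G_gens(2)])
  moreover have "(rs2 l \<circ> h) \<circ> (g \<circ> rs2 l) = id"
    by (metis comp_assoc h(2) id_comp rs_invol(2))
  moreover have "(g \<circ> rs2 l) \<circ> (rs2 l \<circ> h) = id"
    by (metis comp_assoc h(3) id_comp rs_invol(2))
  ultimately show ?case by blast
next
  case (mul3 g)
  then obtain h where h: "h \<in> Ggrp \<alpha> \<beta> l m" "h \<circ> g = id" "g \<circ> h = id" by blast
  have "rs3 m \<circ> h \<in> Ggrp \<alpha> \<beta> l m" by (rule G_mul[OF h(1) G_gens(3)])
  moreover have "(rs3 m \<circ> h) \<circ> (g \<circ> rs3 m) = id"
    by (metis comp_assoc h(2) id_comp rs_invol(3))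
  moreover have "(g \<circ> rs3 m) \<circ> (rs3 m \<circ> h) = id"
    by (metis comp_assoc h(3) id_comp rs_invol(3))
  ultimately show ?case by blast
qed

lemma G_group: "group (Gstruct (Ggrp \<alpha> \<beta> l m))"
proof (rule groupI)
  show "\<And>x y. x \<in> carrier (Gstruct (Ggrp \<alpha> \<beta> l m)) \<Longrightarrow> y \<in> carrier (Gstruct (Ggrp \<alpha> \<beta> l m)) \<Longrightarrow>
      x \<otimes>\<^bsub>Gstruct (Ggrp \<alpha> \<beta> l m)\<^esub> y \<in> carrier (Gstruct (Ggrp \<alpha> \<beta> l m))"
    by (simp add: Gstruct_def G_mul)
  show "\<one>\<^bsub>Gstruct (Ggrp \<alpha> \<beta> l m)\<^esub> \<in> carrier (Gstruct (Ggrp \<alpha> \<beta> l m))"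
    by (simp add: Gstruct_def Ggrp.one)
  show "\<And>x y z. (x \<otimes>\<^bsub>Gstruct (Ggrp \<alpha> \<beta> l m)\<^esub> y) \<otimes>\<^bsub>Gstruct (Ggrp \<alpha> \<beta> l m)\<^esub> z =
      x \<otimes>\<^bsub>Gstruct (Ggrp \<alpha> \<beta> l m)\<^esub> (y \<otimes>\<^bsub>Gstruct (Ggrp \<alpha> \<beta> l m)\<^esub> z)"
    by (simp add: Gstruct_def comp_assoc)
  show "\<And>x. \<one>\<^bsub>Gstruct (Ggrp \<alpha> \<beta> l m)\<^esub> \<otimes>\<^bsub>Gstruct (Ggrp \<alpha> \<beta> l m)\<^esub> x = x"
    by (simp add: Gstruct_def)
  show "\<And>x. x \<in> carrier (Gstruct (Ggrp \<alpha> \<beta> l m)) \<Longrightarrow>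
      \<exists>y\<in>carrier (Gstruct (Ggrp \<alpha> \<beta> l m)). y \<otimes>\<^bsub>Gstruct (Ggrp \<alpha> \<beta> l m)\<^esub> x = \<one>\<^bsub>Gstruct (Ggrp \<alpha> \<beta> l m)\<^esub>"
    using G_inv by (fastforce simp: Gstruct_def)
qed

lemma G_inv_eq: assumes "g \<in> Ggrp \<alpha> \<beta> l m"
  shows "inv\<^bsub>Gstruct (Ggrp \<alpha> \<beta> l m)\<^esub> g \<in> Ggrp \<alpha> \<beta> l m \<and> inv\<^bsub>Gstruct (Ggrp \<alpha> \<beta> l m)\<^esub> g \<circ> g = id
    \<and> g \<circ> inv\<^bsub>Gstruct (Ggrp \<alpha> \<beta> l m)\<^esub> g = id"
proof -
  obtain h where h: "h \<in> Ggrp \<alpha> \<beta> l m" "h \<circ> g = id" "g \<circ> h = id" using G_inv[OF assms] by blast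
  have "inv\<^bsub>Gstruct (Ggrp \<alpha> \<beta> l m)\<^esub> g = h"
    by (rule group.inv_equality[OF G_group]) (simp_all add: Gstruct_def h assms)
  thus ?thesis using h by simp
qed


lemma linm_zero: "linm f \<Longrightarrow> f 0 = 0"
  using linm_diff[of f 0 0] by simp

lemma fixed_add: "v \<in> fixed_vecs (Ggrp \<alpha> \<beta> l m) \<Longrightarrow> w \<in> fixed_vecs (Ggrp \<alpha> \<beta> l m) \<Longrightarrow> v + w \<in> fixed_vecs (Ggrp \<alpha> \<beta> l m)"
  by (auto simp: fixed_vecs_def linm_add[OF Ggrp_lin])
lemma fixed_neg: "v \<in> fixed_vecs (Ggrp \<alpha> \<beta> l m) \<Longrightarrow> - v \<in> fixed_vecs (Ggrp \<alpha> \<beta> l m)"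
  by (auto simp: fixed_vecs_def linm_neg[OF Ggrp_lin])

lemma N_normal: "Nsub (Ggrp \<alpha> \<beta> l m) \<lhd> Gstruct (Ggrp \<alpha> \<beta> l m)"
proof -
  let ?G = "Ggrp \<alpha> \<beta> l m" and ?N = "Nsub (Ggrp \<alpha> \<beta> l m)"
  interpret grp: group "Gstruct ?G" by (rule G_group)
  have sub: "subgroup ?N (Gstruct ?G)"
  proof (rule grp.subgroupI)
    show "?N \<subseteq> carrier (Gstruct ?G)" by (auto simp: Nsub_def Gstruct_def)
    have "id \<in> ?N" by (simp add: Nsub_def Ggrp.one fixed_vecs_def linm_zero[OF Ggrp_lin])
    thus "?N \<noteq> {}" by blast
  next
    fix a assume a: "a \<in> ?N"
    hence aG: "a \<in> ?G" by (simp add: Nsub_def)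
    note ia = G_inv_eq[OF aG]
    show "inv\<^bsub>Gstruct ?G\<^esub> a \<in> ?N" unfolding Nsub_def
    proof (intro CollectI conjI allI)
      show "inv\<^bsub>Gstruct ?G\<^esub> a \<in> ?G" using ia by simp
      fix x
      define y where "y = (inv\<^bsub>Gstruct ?G\<^esub> a) x"
      have "a y = x" using ia unfolding y_def by (metis comp_apply id_apply)
      hence "(inv\<^bsub>Gstruct ?G\<^esub> a) x - x = - (a y - y)" unfolding y_def by simp
      moreover have "a y - y \<in> fixed_vecs ?G" using a by (simp add: Nsub_def)
      ultimately show "(inv\<^bsub>Gstruct ?G\<^esub> a) x - x \<in> fixed_vecs ?G" using fixed_neg by metis
    qed
  next
    fix a b assume a: "a \<in> ?N" and b: "b \<in> ?N"
    show "a \<otimes>\<^bsub>Gstruct ?G\<^esub> b \<in> ?N" unfolding Nsub_def Gstruct_def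
    proof (simp, intro conjI allI)
      show "a \<circ> b \<in> ?G" using a b by (simp add: Nsub_def G_mul)
      fix x
      have "a (b x) - x = (a (b x) - b x) + (b x - x)" by simp
      thus "a (b x) - x \<in> fixed_vecs ?G" using a b fixed_add by (metis (no_types, lifting) Nsub_def mem_Collect_eq)
    qed
  qed
  show ?thesis unfolding grp.normal_inv_iff
  proof (intro conjI sub ballI)
    fix g h assume g: "g \<in> carrier (Gstruct ?G)" and h: "h \<in> ?N"
    hence gG: "g \<in> ?G" by (simp add: Gstruct_def)
    note ig = G_inv_eq[OF gG]
    define gi where "gi = inv\<^bsub>Gstruct ?G\<^esub> g"
    show "g \<otimes>\<^bsub>Gstruct ?G\<^esub> h \<otimes>\<^bsub>Gstruct ?G\<^esub> inv\<^bsub>Gstruct ?G\<^esub> g \<in> ?N"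
      unfolding gi_def[symmetric] unfolding Nsub_def Gstruct_def
    proof (simp, intro conjI allI)
      show "g \<circ> h \<circ> gi \<in> ?G" using ig gG h by (simp add: gi_def Nsub_def G_mul)
      fix x
      define y where "y = gi x"
      have gy: "g y = x" using ig unfolding y_def gi_def by (metis comp_apply id_apply)
      have hy: "h y - y \<in> fixed_vecs ?G" using h by (simp add: Nsub_def)
      have "g (h (gi x)) - x = g (h y - y)" using gy linm_diff[OF Ggrp_lin[OF gG]] unfolding y_def by simp
      also have "\<dots> = h y - y" using hy gG by (simp add: fixed_vecs_def)
      finally show "g (h (gi x)) - x \<in> fixed_vecs ?G" using hy by simp
    qed
  qed
qed


lemma refl_comp_shift:
  assumes F: "linf F" and FB: "F B = 0" and nu: "\<And>z. \<nu> z = z - (t * F z) *s B"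
  shows "refl F E \<circ> \<nu> = refl F (E + t *s B)"
  by (rule ext) (simp add: refl_def nu linf_diff[OF F] linf_scale[OF F] FB vec_eq_iff algebra_simps)

lemma nu_inv:
  fixes \<nu> :: "complex^3 \<Rightarrow> complex^3"
  assumes nl: "linm \<nu>" and F: "linf F" and FE: "F E = 2" and FB: "F B = 0" and B3: "B$3 \<noteq> 0"
    and nB: "\<nu> B = B" and nfix: "\<And>x. \<exists>c. \<nu> x - x = c *s B"
    and inv: "(refl F E \<circ> \<nu>) \<circ> (refl F E \<circ> \<nu>) = id"
  shows "\<exists>t. \<forall>x. \<nu> x = x - (t * F x) *s B"
proof -
  define h where "h x = (\<nu> x - x)$3 / B$3" for x
  have nh: "\<nu> x = x + h x *s B" for x
  proof -
    obtain c where c: "\<nu> x - x = c *s B" using nfix by blast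
    hence "h x = c" unfolding h_def using B3 by simp
    thus ?thesis using c by (metis add.commute diff_add_cancel)
  qed
  have hadd: "h (x + y) = h x + h y" for x y unfolding h_def
    by (simp add: linm_add[OF nl] add_divide_distrib[symmetric] algebra_simps)
  have hsc: "h (c *s x) = c * h x" for c x unfolding h_def
    by (simp add: linm_scale[OF nl] algebra_simps)
  have hdiff: "h (x - y) = h x - h y" for x y by (metis add_diff_cancel diff_add_cancel hadd)
  have hB: "h B = 0" unfolding h_def nB by simp
  have FnU: "F (\<nu> x) = F x" for x
  proof -
    have "F (\<nu> x) = F (x + h x *s B)" by (subst nh) (rule refl)
    thus ?thesis by (simp add: linf_add[OF F] linf_scale[OF F] FB)
  qed
  have key: "(2 * h x - F x * h E) *s B = 0" for x
  proof -
    define y where "y = refl F E (\<nu> x)"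
    have y: "y = x - F x *s E + h x *s B" unfolding y_def refl_def FnU by (subst nh) (simp add: vec_eq_iff)
    have hy: "h y = h x - F x * h E"
      unfolding y by (simp add: hadd hdiff hsc hB)
    have Fy: "F y = - F x" unfolding y by (simp add: linf_add[OF F] linf_diff[OF F] linf_scale[OF F] FB FE)
    have "refl F E (\<nu> y) = x" using inv unfolding y_def by (metis comp_apply id_apply)
    moreover have "refl F E (\<nu> y) = x + (2 * h x - F x * h E) *s B"
      unfolding refl_def FnU Fy unfolding nh hy unfolding y by (simp add: vec_eq_iff algebra_simps)
    ultimately show ?thesis by (metis add_cancel_left_right)
  qed
  have "h x = F x * (h E / 2)" for x
  proof -
    have "(2 * h x - F x * h E) * B$3 = 0" using key[of x] by (metis vector_smult_rzero zero_index vector_scalar_mult_def vec_lambda_beta)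
    hence "2 * h x - F x * h E = 0" using B3 by simp
    thus ?thesis by (simp add: field_simps)
  qed
  hence "\<forall>x. \<nu> x = x - ((- (h E / 2)) * F x) *s B" using nh by (simp add: vec_eq_iff algebra_simps)
  thus ?thesis by blast
qed

context setting
begin

lemma rs_b: "rs1 \<alpha> \<beta> (bv \<gamma> l m) = bv \<gamma> l m" "rs2 l (bv \<gamma> l m) = bv \<gamma> l m" "rs3 m (bv \<gamma> l m) = bv \<gamma> l m"
  by (simp_all add: rs1_refl rs2_refl rs3_refl refl_def Fb)

lemma G_fix_b: "g \<in> Ggrp \<alpha> \<beta> l m \<Longrightarrow> g (bv \<gamma> l m) = bv \<gamma> l m"
  by (induction rule: Ggrp.induct) (simp_all add: rs_b)

lemma scale_fixed: "c *s bv \<gamma> l m \<in> fixed_vecs (Ggrp \<alpha> \<beta> l m)"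
  by (simp add: fixed_vecs_def linm_scale[OF Ggrp_lin] G_fix_b)

lemma fixed_b: assumes m2: "m + 2 \<noteq> 0" and v: "v \<in> fixed_vecs (Ggrp \<alpha> \<beta> l m)"
  shows "v = (v$3/(m+2)) *s bv \<gamma> l m"
proof -
  have "rs2 l v = v" "rs3 m v = v" using v G_gens by (auto simp: fixed_vecs_def)
  hence "F2 l v *s e 2 1 = 0" "F3 m v *s e 3 1 = 0" by (simp_all add: rs2_refl rs3_refl refl_def)
  hence "F2 l v = 0" "F3 m v = 0" by (auto simp: vec_eq_iff e_def dest: spec[of _ 2] spec[of _ 3])
  hence e2: "- v$1 + 2 * v$2 - l * v$3 = 0" and e3: "- v$1 - m * v$2 + 2 * v$3 = 0"
    by (simp_all add: F2_def F3_def)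
  have v2: "v$2 = (l+2) * v$3 / (m+2)"
  proof -
    have "(m+2) * v$2 = (l+2) * v$3" using e2 e3 by (simp add: algebra_simps)
    thus ?thesis using m2 by (simp add: field_simps)
  qed
  have v1: "v$1 = 2 * v$2 - l * v$3" using e2 by (simp add: algebra_simps)
  show ?thesis
  proof -
    have "v$1 = v$3 / (m+2) * bv \<gamma> l m $ 1" unfolding v1 v2 bv_def e_def using m2 lm[symmetric]
      by (simp add: field_simps)
    moreover have "v$2 = v$3 / (m+2) * bv \<gamma> l m $ 2" unfolding v2 bv_def e_def using m2
      by (simp add: field_simps)
    moreover have "v$3 = v$3 / (m+2) * bv \<gamma> l m $ 3" unfolding bv_def e_def using m2
      by (simp add: field_simps)
    ultimately show ?thesis by (simp add: vec_eq_iff forall_3)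
  qed
qed

lemma nu_form:
  assumes g4: "4 - \<gamma> \<noteq> 0" and nl: "linm \<nu>" and nb: "\<nu> (bv \<gamma> l m) = bv \<gamma> l m"
    and n2: "\<nu> (e 2 1) = e 2 1 + u2 *s bv \<gamma> l m" and n3: "\<nu> (e 3 1) = e 3 1 + u3 *s bv \<gamma> l m"
  shows "\<nu> z = z + (u2 * (z$2 - z$1*(l+2)/(4-\<gamma>)) + u3 * (z$3 - z$1*(m+2)/(4-\<gamma>))) *s bv \<gamma> l m"
proof -
  define c1 where "c1 = z$1/(4-\<gamma>)"
  define c2 where "c2 = z$2 - z$1*(l+2)/(4-\<gamma>)"
  define c3 where "c3 = z$3 - z$1*(m+2)/(4-\<gamma>)"
  have dz: "z = c1 *s bv \<gamma> l m + c2 *s e 2 1 + c3 *s e 3 1"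
    using g4 by (simp add: c1_def c2_def c3_def vec_eq_iff forall_3 bv_def e_def)
  have "\<nu> z = \<nu> (c1 *s bv \<gamma> l m + c2 *s e 2 1 + c3 *s e 3 1)" using dz by simp
  also have "\<dots> = c1 *s bv \<gamma> l m + c2 *s (e 2 1 + u2 *s bv \<gamma> l m) + c3 *s (e 3 1 + u3 *s bv \<gamma> l m)"
    by (simp only: linm_add[OF nl] linm_scale[OF nl] nb n2 n3)
  also have "\<dots> = (c1 *s bv \<gamma> l m + c2 *s e 2 1 + c3 *s e 3 1) + (u2 * c2 + u3 * c3) *s bv \<gamma> l m"
    by (simp add: vec_eq_iff algebra_simps)
  also have "\<dots> = z + (u2 * (z$2 - z$1*(l+2)/(4-\<gamma>)) + u3 * (z$3 - z$1*(m+2)/(4-\<gamma>))) *s bv \<gamma> l m"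
    using dz[symmetric] by (simp add: c2_def c3_def)
  finally show ?thesis .
qed


lemma nu_c:
  assumes g4: "4 - \<gamma> \<noteq> 0" and nN: "\<nu> \<in> Nsub (Ggrp \<alpha> \<beta> l m)"
  shows "corresp (bv \<gamma> l m) \<nu> (psc t (\<alpha>, \<beta>)) \<Longrightarrow> \<nu> z = z - (t * F1 \<alpha> \<beta> z) *s bv \<gamma> l m"
    and "corresp (bv \<gamma> l m) \<nu> (psc t (-2, l)) \<Longrightarrow> \<nu> z = z - (t * F2 l z) *s bv \<gamma> l m"
    and "corresp (bv \<gamma> l m) \<nu> (psc t (m, -2)) \<Longrightarrow> \<nu> z = z - (t * F3 m z) *s bv \<gamma> l m"
proof -
  have nl: "linm \<nu>" using nN Ggrp_lin unfolding Nsub_def by blast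
  have ab: "\<alpha> * (l+2) + \<beta> * (m+2) = 2 * (4 - \<gamma>)" using Dl by (simp add: algebra_simps)
  have lm': "2 * (l+2) - l * (m+2) = 4 - \<gamma>" "2 * (m+2) - m * (l+2) = 4 - \<gamma>"
    using lm by (simp_all add: algebra_simps)
  {
    assume c: "corresp (bv \<gamma> l m) \<nu> (psc t (\<alpha>, \<beta>))"
    note nf = nu_form[OF g4 nl, of "t*\<alpha>" "t*\<beta>"]
    have h1: "\<nu> z = z + (t*\<alpha> * (z$2 - z$1*(l+2)/(4-\<gamma>)) + t*\<beta> * (z$3 - z$1*(m+2)/(4-\<gamma>))) *s bv \<gamma> l m"
      by (rule nf) (use c in \<open>simp_all add: corresp_def psc_def\<close>)
    have h2: "t*\<alpha> * (z$2 - z$1*(l+2)/(4-\<gamma>)) + t*\<beta> * (z$3 - z$1*(m+2)/(4-\<gamma>)) = t * (\<alpha> * z$2 + \<beta> * z$3) - t * z$1 * ((\<alpha> * (l+2) + \<beta> * (m+2)) / (4-\<gamma>))"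
      by (simp add: algebra_simps diff_divide_distrib add_divide_distrib)
    have h3: "(\<alpha> * (l+2) + \<beta> * (m+2)) / (4-\<gamma>) = 2" by (subst ab) (rule nonzero_mult_div_cancel_right[OF g4])
    have "t*\<alpha> * (z$2 - z$1*(l+2)/(4-\<gamma>)) + t*\<beta> * (z$3 - z$1*(m+2)/(4-\<gamma>)) = - (t * F1 \<alpha> \<beta> z)" unfolding h2 h3 by (simp add: F1_def algebra_simps)
    thus "\<nu> z = z - (t * F1 \<alpha> \<beta> z) *s bv \<gamma> l m" using h1 by (simp add: vec_eq_iff)
  }
  {
    assume c: "corresp (bv \<gamma> l m) \<nu> (psc t (-2, l))"
    note nf = nu_form[OF g4 nl, of "t*(-2)" "t*l"]
    have h1: "\<nu> z = z + (t*(-2) * (z$2 - z$1*(l+2)/(4-\<gamma>)) + t*l * (z$3 - z$1*(m+2)/(4-\<gamma>))) *s bv \<gamma> l m"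
      by (rule nf) (use c in \<open>simp_all add: corresp_def psc_def\<close>)
    have h2: "t*(-2) * (z$2 - z$1*(l+2)/(4-\<gamma>)) + t*l * (z$3 - z$1*(m+2)/(4-\<gamma>)) = t * (-2 * z$2 + l * z$3) + t * z$1 * ((2 * (l+2) - l * (m+2)) / (4-\<gamma>))"
      by (simp add: algebra_simps diff_divide_distrib add_divide_distrib)
    have h3: "(2 * (l+2) - l * (m+2)) / (4-\<gamma>) = 1" using lm'(1) g4 by simp
    have "t*(-2) * (z$2 - z$1*(l+2)/(4-\<gamma>)) + t*l * (z$3 - z$1*(m+2)/(4-\<gamma>)) = - (t * F2 l z)" unfolding h2 h3 by (simp add: F2_def algebra_simps)
    thus "\<nu> z = z - (t * F2 l z) *s bv \<gamma> l m" using h1 by (simp add: vec_eq_iff)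
  }
  {
    assume c: "corresp (bv \<gamma> l m) \<nu> (psc t (m, -2))"
    note nf = nu_form[OF g4 nl, of "t*m" "t*(-2)"]
    have h1: "\<nu> z = z + (t*m * (z$2 - z$1*(l+2)/(4-\<gamma>)) + t*(-2) * (z$3 - z$1*(m+2)/(4-\<gamma>))) *s bv \<gamma> l m"
      by (rule nf) (use c in \<open>simp_all add: corresp_def psc_def\<close>)
    have h2: "t*m * (z$2 - z$1*(l+2)/(4-\<gamma>)) + t*(-2) * (z$3 - z$1*(m+2)/(4-\<gamma>)) = t * (m * z$2 - 2 * z$3) + t * z$1 * ((2 * (m+2) - m * (l+2)) / (4-\<gamma>))"
      by (simp add: algebra_simps diff_divide_distrib add_divide_distrib)
    have h3: "(2 * (m+2) - m * (l+2)) / (4-\<gamma>) = 1" using lm'(2) g4 by simp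
    have "t*m * (z$2 - z$1*(l+2)/(4-\<gamma>)) + t*(-2) * (z$3 - z$1*(m+2)/(4-\<gamma>)) = - (t * F3 m z)" unfolding h2 h3 by (simp add: F3_def algebra_simps)
    thus "\<nu> z = z - (t * F3 m z) *s bv \<gamma> l m" using h1 by (simp add: vec_eq_iff)
  }
qed

lemma corresp_c:
  "(\<And>z. \<nu> z = z - (t * F1 \<alpha> \<beta> z) *s bv \<gamma> l m) \<Longrightarrow> corresp (bv \<gamma> l m) \<nu> (psc t (\<alpha>, \<beta>))"
  "(\<And>z. \<nu> z = z - (t * F2 l z) *s bv \<gamma> l m) \<Longrightarrow> corresp (bv \<gamma> l m) \<nu> (psc t (-2, l))"
  "(\<And>z. \<nu> z = z - (t * F3 m z) *s bv \<gamma> l m) \<Longrightarrow> corresp (bv \<gamma> l m) \<nu> (psc t (m, -2))"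
  by (simp_all add: corresp_def psc_def Fb Fe vec_eq_iff)


lemma inN_R:
  assumes g4: "4 - \<gamma> \<noteq> 0" and m2: "m + 2 \<noteq> 0"
    and sg: "\<gamma> = 2 + \<omega> + inverse \<omega>" and w2: "\<omega>^2 \<noteq> 1" and wN: "\<omega>^N = -1"
  shows "((rs1 \<alpha> \<beta> \<circ> (rs2 l \<circ> rs3 m) ^^ N) ^^ 2) \<in> Nsub (Ggrp \<alpha> \<beta> l m)"
proof -
  have K1: "F1 \<alpha> \<beta> u = 0" if "F2 l u = 0" "F3 m u = 0" for u
    using I3[of u] that m2 by (simp add: add.commute)
  have sg': "l * m - 2 = \<omega> + inverse \<omega>" using sg lm by simp
  have rel: "(4-\<gamma>) *s e 1 1 + (l+2) *s e 2 1 + (m+2) *s e 3 1 = 1 *s bv \<gamma> l m"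
    by (simp add: bv_def e_def vec_eq_iff)
  note mw = mainw[of "F1 \<alpha> \<beta>" "F2 l" "F3 m" "e 1 1" "e 2 1" "e 3 1"
     l m \<omega> N "bv \<gamma> l m" "4 - \<gamma>" "l + 2" "m + 2",
     OF linF1 linF2 linF3 _ _ _ _ _ sg' w2 wN _ _ _ K1 rel g4, folded rs1_refl rs2_refl rs3_refl]
  let ?w = "(rs1 \<alpha> \<beta> \<circ> (rs2 l \<circ> rs3 m) ^^ N) ^^ 2"
  have "?w \<in> Ggrp \<alpha> \<beta> l m"
    by (intro G_pow G_mul G_gens)
  moreover have "?w x - x \<in> fixed_vecs (Ggrp \<alpha> \<beta> l m)" for x
  proof -
    have "?w x = x + (2 * (1 / (4 - \<gamma>)) * F1 \<alpha> \<beta> x) *s bv \<gamma> l m"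
      by (rule mw) (simp_all add: Fe Fb)
    thus ?thesis using scale_fixed by simp
  qed
  ultimately show ?thesis by (simp add: Nsub_def)
qed

lemma inN_Q:
  assumes g4: "4 - \<gamma> \<noteq> 0" and l2: "l + 2 \<noteq> 0" and b4: "4 - \<beta> \<noteq> 0"
    and sg: "\<beta> = 2 + \<omega> + inverse \<omega>" and w2: "\<omega>^2 \<noteq> 1" and wN: "\<omega>^N = -1"
  shows "((rs2 l \<circ> (rs3 m \<circ> rs1 \<alpha> \<beta>) ^^ N) ^^ 2) \<in> Nsub (Ggrp \<alpha> \<beta> l m)"
proof -
  have K1: "F2 l u = 0" if "F3 m u = 0" "F1 \<alpha> \<beta> u = 0" for u
    using I2[of u] that b4 by simp
  have sg': "1 * \<beta> - 2 = \<omega> + inverse \<omega>" using sg by simp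
  have rel: "(l+2) *s e 2 1 + (m+2) *s e 3 1 + (4-\<gamma>) *s e 1 1 = 1 *s bv \<gamma> l m"
    by (simp add: bv_def e_def vec_eq_iff)
  note mw = mainw[of "F2 l" "F3 m" "F1 \<alpha> \<beta>" "e 2 1" "e 3 1" "e 1 1"
     1 \<beta> \<omega> N "bv \<gamma> l m" "l + 2" "m + 2" "4 - \<gamma>",
     OF linF2 linF3 linF1 _ _ _ _ _ sg' w2 wN _ _ _ K1 rel l2, folded rs1_refl rs2_refl rs3_refl]
  let ?w = "(rs2 l \<circ> (rs3 m \<circ> rs1 \<alpha> \<beta>) ^^ N) ^^ 2"
  have "?w \<in> Ggrp \<alpha> \<beta> l m"
    by (intro G_pow G_mul G_gens)
  moreover have "?w x - x \<in> fixed_vecs (Ggrp \<alpha> \<beta> l m)" for x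
  proof -
    obtain c where "?w x = x + c *s bv \<gamma> l m"
      using mw[of x] by (metis Fe Fb)
    thus ?thesis using scale_fixed by simp
  qed
  ultimately show ?thesis by (simp add: Nsub_def)
qed

lemma inN_P:
  assumes g4: "4 - \<gamma> \<noteq> 0" and m2: "m + 2 \<noteq> 0" and a4: "4 - \<alpha> \<noteq> 0"
    and sg: "\<alpha> = 2 + \<omega> + inverse \<omega>" and w2: "\<omega>^2 \<noteq> 1" and wN: "\<omega>^N = -1"
  shows "((rs3 m \<circ> (rs1 \<alpha> \<beta> \<circ> rs2 l) ^^ N) ^^ 2) \<in> Nsub (Ggrp \<alpha> \<beta> l m)"
proof -
  have K1: "F3 m u = 0" if "F1 \<alpha> \<beta> u = 0" "F2 l u = 0" for u
    using I3[of u] that a4 by simp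
  have sg': "\<alpha> * 1 - 2 = \<omega> + inverse \<omega>" using sg by simp
  have rel: "(m+2) *s e 3 1 + (4-\<gamma>) *s e 1 1 + (l+2) *s e 2 1 = 1 *s bv \<gamma> l m"
    by (simp add: bv_def e_def vec_eq_iff)
  note mw = mainw[of "F3 m" "F1 \<alpha> \<beta>" "F2 l" "e 3 1" "e 1 1" "e 2 1"
     \<alpha> 1 \<omega> N "bv \<gamma> l m" "m + 2" "4 - \<gamma>" "l + 2",
     OF linF3 linF1 linF2 _ _ _ _ _ sg' w2 wN _ _ _ K1 rel m2, folded rs1_refl rs2_refl rs3_refl]
  let ?w = "(rs3 m \<circ> (rs1 \<alpha> \<beta> \<circ> rs2 l) ^^ N) ^^ 2"
  have "?w \<in> Ggrp \<alpha> \<beta> l m"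
    by (intro G_pow G_mul G_gens)
  moreover have "?w x - x \<in> fixed_vecs (Ggrp \<alpha> \<beta> l m)" for x
  proof -
    obtain c where "?w x = x + c *s bv \<gamma> l m"
      using mw[of x] by (metis Fe Fb)
    thus ?thesis using scale_fixed by simp
  qed
  ultimately show ?thesis by (simp add: Nsub_def)
qed

end

lemma tau_facts:
  assumes tau: "\<tau> \<in> hom (Gstruct (Ggrp \<alpha> \<beta> l m) Mod Nsub (Ggrp \<alpha> \<beta> l m)) (Gstruct (Ggrp \<alpha> \<beta> l m))"
  shows "\<tau> (Nsub (Ggrp \<alpha> \<beta> l m)) = id"
    and "\<And>x y. x \<in> Ggrp \<alpha> \<beta> l m \<Longrightarrow> y \<in> Ggrp \<alpha> \<beta> l m \<Longrightarrow>
          \<tau> (Nsub (Ggrp \<alpha> \<beta> l m) #>\<^bsub>Gstruct (Ggrp \<alpha> \<beta> l m)\<^esub> (x \<circ> y))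
          = \<tau> (Nsub (Ggrp \<alpha> \<beta> l m) #>\<^bsub>Gstruct (Ggrp \<alpha> \<beta> l m)\<^esub> x) \<circ> \<tau> (Nsub (Ggrp \<alpha> \<beta> l m) #>\<^bsub>Gstruct (Ggrp \<alpha> \<beta> l m)\<^esub> y)"
    and "\<And>x n. x \<in> Ggrp \<alpha> \<beta> l m \<Longrightarrow>
          \<tau> (Nsub (Ggrp \<alpha> \<beta> l m) #>\<^bsub>Gstruct (Ggrp \<alpha> \<beta> l m)\<^esub> (x ^^ n))
          = \<tau> (Nsub (Ggrp \<alpha> \<beta> l m) #>\<^bsub>Gstruct (Ggrp \<alpha> \<beta> l m)\<^esub> x) ^^ n"
proof -
  let ?G = "Ggrp \<alpha> \<beta> l m" and ?N = "Nsub (Ggrp \<alpha> \<beta> l m)"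
  interpret nrm: normal ?N "Gstruct ?G" by (rule N_normal)
  have gm: "group (Gstruct ?G Mod ?N)" by (rule nrm.factorgroup_is_group)
  have "\<tau> (\<one>\<^bsub>Gstruct ?G Mod ?N\<^esub>) = \<one>\<^bsub>Gstruct ?G\<^esub>" by (rule hom_one[OF tau gm G_group])
  thus one: "\<tau> ?N = id" by (simp add: FactGroup_def Gstruct_def)
  show mul: "\<tau> (?N #>\<^bsub>Gstruct ?G\<^esub> (x \<circ> y)) = \<tau> (?N #>\<^bsub>Gstruct ?G\<^esub> x) \<circ> \<tau> (?N #>\<^bsub>Gstruct ?G\<^esub> y)"
    if x: "x \<in> ?G" and y: "y \<in> ?G" for x y
  proof -
    have sub: "?N \<subseteq> carrier (Gstruct ?G)" by (auto simp: Nsub_def Gstruct_def)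
    have X: "?N #>\<^bsub>Gstruct ?G\<^esub> x \<in> carrier (Gstruct ?G Mod ?N)"
      using nrm.rcosetsI[OF sub] x by (simp add: FactGroup_def Gstruct_def)
    have Y: "?N #>\<^bsub>Gstruct ?G\<^esub> y \<in> carrier (Gstruct ?G Mod ?N)"
      using nrm.rcosetsI[OF sub] y by (simp add: FactGroup_def Gstruct_def)
    have "(?N #>\<^bsub>Gstruct ?G\<^esub> x) <#>\<^bsub>Gstruct ?G\<^esub> (?N #>\<^bsub>Gstruct ?G\<^esub> y) = ?N #>\<^bsub>Gstruct ?G\<^esub> (x \<otimes>\<^bsub>Gstruct ?G\<^esub> y)"
      by (rule nrm.rcos_sum) (simp_all add: Gstruct_def x y)
    hence "?N #>\<^bsub>Gstruct ?G\<^esub> (x \<circ> y) = (?N #>\<^bsub>Gstruct ?G\<^esub> x) \<otimes>\<^bsub>Gstruct ?G Mod ?N\<^esub> (?N #>\<^bsub>Gstruct ?G\<^esub> y)"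
      by (simp add: FactGroup_def Gstruct_def)
    hence "\<tau> (?N #>\<^bsub>Gstruct ?G\<^esub> (x \<circ> y)) = \<tau> (?N #>\<^bsub>Gstruct ?G\<^esub> x) \<otimes>\<^bsub>Gstruct ?G\<^esub> \<tau> (?N #>\<^bsub>Gstruct ?G\<^esub> y)"
      using hom_mult[OF tau X Y] by simp
    thus ?thesis by (simp add: Gstruct_def)
  qed
  show "\<tau> (?N #>\<^bsub>Gstruct ?G\<^esub> (x ^^ n)) = \<tau> (?N #>\<^bsub>Gstruct ?G\<^esub> x) ^^ n" if x: "x \<in> ?G" for x n
  proof (induction n)
    case 0
    have sub: "?N \<subseteq> carrier (Gstruct ?G)" by (auto simp: Nsub_def Gstruct_def)
    have "?N #>\<^bsub>Gstruct ?G\<^esub> \<one>\<^bsub>Gstruct ?G\<^esub> = ?N" by (rule nrm.coset_mult_one[OF sub])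
    hence e: "?N #>\<^bsub>Gstruct ?G\<^esub> id = ?N" by (simp add: Gstruct_def)
    show ?case by (simp only: funpow.simps(1) e one)
  next
    case (Suc n)
    have "\<tau> (?N #>\<^bsub>Gstruct ?G\<^esub> (x ^^ Suc n)) = \<tau> (?N #>\<^bsub>Gstruct ?G\<^esub> (x \<circ> x ^^ n))" by simp
    also have "\<dots> = \<tau> (?N #>\<^bsub>Gstruct ?G\<^esub> x) \<circ> \<tau> (?N #>\<^bsub>Gstruct ?G\<^esub> (x ^^ n))"
      by (rule mul[OF x G_pow[OF x]])
    also have "\<dots> = \<tau> (?N #>\<^bsub>Gstruct ?G\<^esub> x) \<circ> \<tau> (?N #>\<^bsub>Gstruct ?G\<^esub> x) ^^ n"
      by (simp only: Suc)
    finally show ?case by (simp only: funpow.simps(2))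
  qed
qed


context setting
begin

lemma tau_gen:
  assumes m2: "m + 2 \<noteq> 0"
    and tau: "\<tau> \<in> hom (Gstruct (Ggrp \<alpha> \<beta> l m) Mod Nsub (Ggrp \<alpha> \<beta> l m)) (Gstruct (Ggrp \<alpha> \<beta> l m))"
    and sec: "\<forall>X \<in> carrier (Gstruct (Ggrp \<alpha> \<beta> l m) Mod Nsub (Ggrp \<alpha> \<beta> l m)).
               Nsub (Ggrp \<alpha> \<beta> l m) #>\<^bsub>Gstruct (Ggrp \<alpha> \<beta> l m)\<^esub> \<tau> X = X"
    and sG: "refl F E \<in> Ggrp \<alpha> \<beta> l m" and F: "linf F" and FE: "F E = 2" and FB: "F (bv \<gamma> l m) = 0"
  shows "\<exists>t \<nu>. \<nu> \<in> Nsub (Ggrp \<alpha> \<beta> l m) \<and> (\<forall>z. \<nu> z = z - (t * F z) *s bv \<gamma> l m)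
          \<and> \<tau> (Nsub (Ggrp \<alpha> \<beta> l m) #>\<^bsub>Gstruct (Ggrp \<alpha> \<beta> l m)\<^esub> refl F E) = refl F E \<circ> \<nu>"
proof -
  let ?G = "Ggrp \<alpha> \<beta> l m" and ?N = "Nsub (Ggrp \<alpha> \<beta> l m)"
  let ?s = "refl F E"
  interpret nrm: normal ?N "Gstruct ?G" by (rule N_normal)
  have sub: "?N \<subseteq> carrier (Gstruct ?G)" by (auto simp: Nsub_def Gstruct_def)
  define X where "X = ?N #>\<^bsub>Gstruct ?G\<^esub> ?s"
  have X: "X \<in> carrier (Gstruct ?G Mod ?N)"
    using nrm.rcosetsI[OF sub] sG unfolding X_def by (simp add: FactGroup_def Gstruct_def)
  have tX: "\<tau> X \<in> ?G" using hom_in_carrier[OF tau X] by (simp add: Gstruct_def)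
  have "\<tau> X \<in> ?N #>\<^bsub>Gstruct ?G\<^esub> \<tau> X"
  proof (rule nrm.rcos_self)
    show "\<tau> X \<in> carrier (Gstruct ?G)" by (simp add: Gstruct_def tX)
    show "subgroup ?N (Gstruct ?G)" by (rule nrm.subgroup_axioms)
  qed
  hence "\<tau> X \<in> X" using sec X by simp
  then obtain n where nN: "n \<in> ?N" and tXn: "\<tau> X = n \<circ> ?s"
    unfolding X_def r_coset_def by (auto simp: Gstruct_def)
  have ss: "?s \<circ> ?s = id" by (rule refl_invol[OF F FE])
  define \<nu> where "\<nu> = ?s \<circ> \<tau> X"
  have snu: "?s \<circ> \<nu> = \<tau> X" unfolding \<nu>_def by (simp add: comp_assoc[symmetric] ss)
  have nuG: "\<nu> \<in> ?G" unfolding \<nu>_def by (rule G_mul[OF tX sG])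
  have slin: "linm ?s" by (rule linm_refl[OF F])
  have nfix: "\<nu> x - x \<in> fixed_vecs ?G" for x
  proof -
    have nf: "n (?s x) - ?s x \<in> fixed_vecs ?G" using nN by (simp add: Nsub_def)
    have "\<nu> x - x = ?s (n (?s x)) - ?s (?s x)" unfolding \<nu>_def tXn using ss
      by (simp add: pointfree_idE)
    also have "\<dots> = ?s (n (?s x) - ?s x)" by (simp add: linm_diff[OF slin])
    also have "\<dots> = n (?s x) - ?s x" using nf sG by (simp add: fixed_vecs_def)
    finally show ?thesis using nf by simp
  qed
  have nuN: "\<nu> \<in> ?N" using nuG nfix by (simp add: Nsub_def)
  have inv2: "(?s \<circ> \<nu>) \<circ> (?s \<circ> \<nu>) = id"
  proof -
    have "\<tau> X \<circ> \<tau> X = \<tau> (?N #>\<^bsub>Gstruct ?G\<^esub> (?s \<circ> ?s))"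
      unfolding X_def by (rule tau_facts(2)[OF tau sG sG, symmetric])
    also have "\<dots> = \<tau> (?N #>\<^bsub>Gstruct ?G\<^esub> (?s ^^ 0))" by (simp only: ss funpow.simps(1))
    also have "\<dots> = id" by (subst tau_facts(3)[OF tau sG]) (simp only: funpow.simps(1))
    finally show ?thesis unfolding snu .
  qed
  have "\<exists>t. \<forall>x. \<nu> x = x - (t * F x) *s bv \<gamma> l m"
  proof (rule nu_inv[OF _ F FE FB _ _ _ inv2])
    show "linm \<nu>" by (rule Ggrp_lin[OF nuG])
    show "bv \<gamma> l m $ 3 \<noteq> 0" using m2 by (simp add: bv_def e_def)
    show "\<nu> (bv \<gamma> l m) = bv \<gamma> l m" by (rule G_fix_b[OF nuG])
    show "\<exists>c. \<nu> x - x = c *s bv \<gamma> l m" for x using fixed_b[OF m2 nfix[of x]] by blast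
  qed
  then obtain t where "\<forall>z. \<nu> z = z - (t * F z) *s bv \<gamma> l m" by blast
  thus ?thesis using nuN snu unfolding X_def by metis
qed

end


lemma four_ne: "\<omega>^2 \<noteq> 1 \<Longrightarrow> 4 - (2 + \<omega> + inverse \<omega>) \<noteq> (0::complex)"
proof
  assume w2: "\<omega>^2 \<noteq> 1" and h: "4 - (2 + \<omega> + inverse \<omega>) = 0"
  show False
  proof (cases "\<omega> = 0")
    case True thus False using h by simp
  next
    case False
    hence "(\<omega> - 1)^2 = - \<omega> * (4 - (2 + \<omega> + inverse \<omega>))"
      by (simp add: field_simps power2_eq_square)
    hence "\<omega> = 1" using h by simp
    thus False using w2 by simp
  qed
qed

lemma l2_ne:
  fixes \<alpha> \<beta> \<gamma> l m :: complex
  assumes lm: "l * m = \<gamma>" and Dl: "8 - 2*\<alpha> - 2*\<beta> - 2*\<gamma> - (\<alpha> * l + \<beta> * m) = 0"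
    and b4: "4 - \<beta> \<noteq> 0" and g4: "4 - \<gamma> \<noteq> 0"
  shows "l + 2 \<noteq> 0"
proof
  assume "l + 2 = 0"
  hence l: "l = -2" by (metis add_eq_0_iff minus_minus)
  have "(4 - \<beta>) * (4 - \<gamma>) = 2 * (8 - 2*\<alpha> - 2*\<beta> - 2*\<gamma> - (\<alpha> * l + \<beta> * m))"
    unfolding lm[symmetric] l by (simp add: algebra_simps)
  thus False using Dl b4 g4 by simp
qed

lemma m2_ne:
  fixes \<alpha> \<beta> \<gamma> l m :: complex
  assumes lm: "l * m = \<gamma>" and Dl: "8 - 2*\<alpha> - 2*\<beta> - 2*\<gamma> - (\<alpha> * l + \<beta> * m) = 0"
    and a4: "4 - \<alpha> \<noteq> 0" and g4: "4 - \<gamma> \<noteq> 0"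
  shows "m + 2 \<noteq> 0"
proof
  assume "m + 2 = 0"
  hence m: "m = -2" by (metis add_eq_0_iff minus_minus)
  have "(4 - \<alpha>) * (4 - \<gamma>) = 2 * (8 - 2*\<alpha> - 2*\<beta> - 2*\<gamma> - (\<alpha> * l + \<beta> * m))"
    unfolding lm[symmetric] m by (simp add: algebra_simps)
  thus False using Dl a4 g4 by simp
qed

theorem theorem2:
  fixes p q r :: nat and k1 k2 k3 :: int and \<alpha> \<beta> \<gamma> l m :: complex
  assumes "p \<ge> 3" "q \<ge> 3" "r \<ge> 3"
    and "coprime k1 (int p)" "coprime k2 (int q)" "coprime k3 (int r)"
    and "\<alpha> = complex_of_real (4 * (cos (pi * real_of_int k1 / real p))^2)"
    and "\<beta> = complex_of_real (4 * (cos (pi * real_of_int k2 / real q))^2)"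
    and "\<gamma> = complex_of_real (4 * (cos (pi * real_of_int k3 / real r))^2)"
    and "l * m = \<gamma>"
    and "8 - 2*\<alpha> - 2*\<beta> - 2*\<gamma> - (\<alpha> * l + \<beta> * m) = 0"
    and "even (p * q * r)"
  defines "G \<equiv> Ggrp \<alpha> \<beta> l m"
    and "N \<equiv> Nsub (Ggrp \<alpha> \<beta> l m)"
    and "b \<equiv> e 1 (4 - \<gamma>) + e 2 (l + 2) + e 3 (m + 2)"
    and "c1 \<equiv> (\<alpha>, \<beta>)" and "c2 \<equiv> (-2, l)" and "c3 \<equiv> (m, -2)"
    and "s1 \<equiv> rs1 \<alpha> \<beta>" and "s2 \<equiv> rs2 l" and "s3 \<equiv> rs3 m"
  shows
    "(\<forall>t1 t2 t3 \<nu>1 \<nu>2 \<nu>3.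
        \<nu>1 \<in> N \<and> corresp b \<nu>1 (psc t1 c1) \<and>
        \<nu>2 \<in> N \<and> corresp b \<nu>2 (psc t2 c2) \<and>
        \<nu>3 \<in> N \<and> corresp b \<nu>3 (psc t3 c3) \<longrightarrow>
        (let s1' = s1 \<circ> \<nu>1; s2' = s2 \<circ> \<nu>2; s3' = s3 \<circ> \<nu>3;
             E = ((4 - \<gamma>) * t1 + (l + 2) * t2 + (m + 2) * t3 = -1) in
          (\<forall>r1. r = 2 * r1 \<longrightarrow> ((s1' \<circ> (s2' \<circ> s3') ^^ r1) ^^ 2 = id \<longleftrightarrow> E)) \<and>
          (\<forall>q1. q = 2 * q1 \<longrightarrow> ((s2' \<circ> (s3' \<circ> s1') ^^ q1) ^^ 2 = id \<longleftrightarrow> E)) \<and>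
          (\<forall>p1. p = 2 * p1 \<longrightarrow> ((s3' \<circ> (s1' \<circ> s2') ^^ p1) ^^ 2 = id \<longleftrightarrow> E))))
     \<and>
     (\<forall>\<tau>. \<tau> \<in> hom (Gstruct G Mod N) (Gstruct G) \<and>
          (\<forall>X \<in> carrier (Gstruct G Mod N). N #>\<^bsub>Gstruct G\<^esub> \<tau> X = X) \<longrightarrow>
        (\<exists>t1 t2 t3 \<nu>1 \<nu>2 \<nu>3.
           \<nu>1 \<in> N \<and> corresp b \<nu>1 (psc t1 c1) \<and>
           \<nu>2 \<in> N \<and> corresp b \<nu>2 (psc t2 c2) \<and>
           \<nu>3 \<in> N \<and> corresp b \<nu>3 (psc t3 c3) \<and>
           \<tau> (N #>\<^bsub>Gstruct G\<^esub> s1) = s1 \<circ> \<nu>1 \<and>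
           \<tau> (N #>\<^bsub>Gstruct G\<^esub> s2) = s2 \<circ> \<nu>2 \<and>
           \<tau> (N #>\<^bsub>Gstruct G\<^esub> s3) = s3 \<circ> \<nu>3 \<and>
           (4 - \<gamma>) * t1 + (l + 2) * t2 + (m + 2) * t3 = -1))"
proof -
  define \<omega>1 where "\<omega>1 = cis (2 * pi * real_of_int k1 / real p)"
  define \<omega>2 where "\<omega>2 = cis (2 * pi * real_of_int k2 / real q)"
  define \<omega>3 where "\<omega>3 = cis (2 * pi * real_of_int k3 / real r)"
  note o1 = omega_facts[OF assms(1) assms(4), folded \<omega>1_def]
  note o2 = omega_facts[OF assms(2) assms(5), folded \<omega>2_def]
  note o3 = omega_facts[OF assms(3) assms(6), folded \<omega>3_def]
  have a_eq: "\<alpha> = 2 + \<omega>1 + inverse \<omega>1" using assms(7) o1(2) by simp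
  have b_eq: "\<beta> = 2 + \<omega>2 + inverse \<omega>2" using assms(8) o2(2) by simp
  have g_eq: "\<gamma> = 2 + \<omega>3 + inverse \<omega>3" using assms(9) o3(2) by simp
  have a4: "4 - \<alpha> \<noteq> 0" using four_ne[OF o1(1)] a_eq by simp
  have b4: "4 - \<beta> \<noteq> 0" using four_ne[OF o2(1)] b_eq by simp
  have g4: "4 - \<gamma> \<noteq> 0" using four_ne[OF o3(1)] g_eq by simp
  interpret st: setting \<alpha> \<beta> \<gamma> l m using assms(10) assms(11) by unfold_locales
  have l2: "l + 2 \<noteq> 0" by (rule l2_ne[OF assms(10) assms(11) b4 g4])
  have m2: "m + 2 \<noteq> 0" by (rule m2_ne[OF assms(10) assms(11) a4 g4])
  have bb: "b = bv \<gamma> l m" unfolding b_def bv_def ..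
  show ?thesis unfolding G_def N_def c1_def c2_def c3_def s1_def s2_def s3_def bb
  proof (intro conjI)
    show "\<forall>t1 t2 t3 \<nu>1 \<nu>2 \<nu>3.
        \<nu>1 \<in> Nsub (Ggrp \<alpha> \<beta> l m) \<and> corresp (bv \<gamma> l m) \<nu>1 (psc t1 (\<alpha>, \<beta>)) \<and>
        \<nu>2 \<in> Nsub (Ggrp \<alpha> \<beta> l m) \<and> corresp (bv \<gamma> l m) \<nu>2 (psc t2 (-2, l)) \<and>
        \<nu>3 \<in> Nsub (Ggrp \<alpha> \<beta> l m) \<and> corresp (bv \<gamma> l m) \<nu>3 (psc t3 (m, -2)) \<longrightarrow>
        (let s1' = rs1 \<alpha> \<beta> \<circ> \<nu>1; s2' = rs2 l \<circ> \<nu>2; s3' = rs3 m \<circ> \<nu>3;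
             E = ((4 - \<gamma>) * t1 + (l + 2) * t2 + (m + 2) * t3 = -1) in
          (\<forall>r1. r = 2 * r1 \<longrightarrow> ((s1' \<circ> (s2' \<circ> s3') ^^ r1) ^^ 2 = id \<longleftrightarrow> E)) \<and>
          (\<forall>q1. q = 2 * q1 \<longrightarrow> ((s2' \<circ> (s3' \<circ> s1') ^^ q1) ^^ 2 = id \<longleftrightarrow> E)) \<and>
          (\<forall>p1. p = 2 * p1 \<longrightarrow> ((s3' \<circ> (s1' \<circ> s2') ^^ p1) ^^ 2 = id \<longleftrightarrow> E)))"
    proof (intro allI impI)
      fix t1 t2 t3 \<nu>1 \<nu>2 \<nu>3
      assume H: "\<nu>1 \<in> Nsub (Ggrp \<alpha> \<beta> l m) \<and> corresp (bv \<gamma> l m) \<nu>1 (psc t1 (\<alpha>, \<beta>)) \<and>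
        \<nu>2 \<in> Nsub (Ggrp \<alpha> \<beta> l m) \<and> corresp (bv \<gamma> l m) \<nu>2 (psc t2 (-2, l)) \<and>
        \<nu>3 \<in> Nsub (Ggrp \<alpha> \<beta> l m) \<and> corresp (bv \<gamma> l m) \<nu>3 (psc t3 (m, -2))"
      have n1: "\<And>z. \<nu>1 z = z - (t1 * F1 \<alpha> \<beta> z) *s bv \<gamma> l m" using st.nu_c(1)[OF g4] H by blast
      have n2: "\<And>z. \<nu>2 z = z - (t2 * F2 l z) *s bv \<gamma> l m" using st.nu_c(2)[OF g4] H by blast
      have n3: "\<And>z. \<nu>3 z = z - (t3 * F3 m z) *s bv \<gamma> l m" using st.nu_c(3)[OF g4] H by blast
      have e1: "rs1 \<alpha> \<beta> \<circ> \<nu>1 = refl (F1 \<alpha> \<beta>) (Av \<gamma> l m 1 t1)" unfolding rs1_refl Av_def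
        by (rule refl_comp_shift[OF linF1 st.Fb(1) n1])
      have e2: "rs2 l \<circ> \<nu>2 = refl (F2 l) (Av \<gamma> l m 2 t2)" unfolding rs2_refl Av_def
        by (rule refl_comp_shift[OF linF2 st.Fb(2) n2])
      have e3: "rs3 m \<circ> \<nu>3 = refl (F3 m) (Av \<gamma> l m 3 t3)" unfolding rs3_refl Av_def
        by (rule refl_comp_shift[OF linF3 st.Fb(3) n3])
      have cR: "\<And>r1. r = 2 * r1 \<Longrightarrow> (((refl (F1 \<alpha> \<beta>) (Av \<gamma> l m 1 t1) \<circ> (refl (F2 l) (Av \<gamma> l m 2 t2)
            \<circ> refl (F3 m) (Av \<gamma> l m 3 t3)) ^^ r1) ^^ 2) = id)
         \<longleftrightarrow> (4 - \<gamma>) * t1 + (l + 2) * t2 + (m + 2) * t3 = -1"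
        by (rule st.caseR[OF g4 m2 g_eq o3(1) o3(3)])
      have cQ: "\<And>q1. q = 2 * q1 \<Longrightarrow> (((refl (F2 l) (Av \<gamma> l m 2 t2) \<circ> (refl (F3 m) (Av \<gamma> l m 3 t3)
            \<circ> refl (F1 \<alpha> \<beta>) (Av \<gamma> l m 1 t1)) ^^ q1) ^^ 2) = id)
         \<longleftrightarrow> (4 - \<gamma>) * t1 + (l + 2) * t2 + (m + 2) * t3 = -1"
        by (rule st.caseQ[OF g4 l2 b4 b_eq o2(1) o2(3)])
      have cP: "\<And>p1. p = 2 * p1 \<Longrightarrow> (((refl (F3 m) (Av \<gamma> l m 3 t3) \<circ> (refl (F1 \<alpha> \<beta>) (Av \<gamma> l m 1 t1)
            \<circ> refl (F2 l) (Av \<gamma> l m 2 t2)) ^^ p1) ^^ 2) = id)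
         \<longleftrightarrow> (4 - \<gamma>) * t1 + (l + 2) * t2 + (m + 2) * t3 = -1"
        by (rule st.caseP[OF g4 m2 a4 a_eq o1(1) o1(3)])
      show "let s1' = rs1 \<alpha> \<beta> \<circ> \<nu>1; s2' = rs2 l \<circ> \<nu>2; s3' = rs3 m \<circ> \<nu>3;
             E = ((4 - \<gamma>) * t1 + (l + 2) * t2 + (m + 2) * t3 = -1) in
          (\<forall>r1. r = 2 * r1 \<longrightarrow> ((s1' \<circ> (s2' \<circ> s3') ^^ r1) ^^ 2 = id \<longleftrightarrow> E)) \<and>
          (\<forall>q1. q = 2 * q1 \<longrightarrow> ((s2' \<circ> (s3' \<circ> s1') ^^ q1) ^^ 2 = id \<longleftrightarrow> E)) \<and>
          (\<forall>p1. p = 2 * p1 \<longrightarrow> ((s3' \<circ> (s1' \<circ> s2') ^^ p1) ^^ 2 = id \<longleftrightarrow> E))"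
        unfolding Let_def e1 e2 e3 using cR cQ cP by blast
    qed
  next
    show "\<forall>\<tau>. \<tau> \<in> hom (Gstruct (Ggrp \<alpha> \<beta> l m) Mod Nsub (Ggrp \<alpha> \<beta> l m)) (Gstruct (Ggrp \<alpha> \<beta> l m)) \<and>
          (\<forall>X \<in> carrier (Gstruct (Ggrp \<alpha> \<beta> l m) Mod Nsub (Ggrp \<alpha> \<beta> l m)).
             Nsub (Ggrp \<alpha> \<beta> l m) #>\<^bsub>Gstruct (Ggrp \<alpha> \<beta> l m)\<^esub> \<tau> X = X) \<longrightarrow>
        (\<exists>t1 t2 t3 \<nu>1 \<nu>2 \<nu>3.
           \<nu>1 \<in> Nsub (Ggrp \<alpha> \<beta> l m) \<and> corresp (bv \<gamma> l m) \<nu>1 (psc t1 (\<alpha>, \<beta>)) \<and>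
           \<nu>2 \<in> Nsub (Ggrp \<alpha> \<beta> l m) \<and> corresp (bv \<gamma> l m) \<nu>2 (psc t2 (-2, l)) \<and>
           \<nu>3 \<in> Nsub (Ggrp \<alpha> \<beta> l m) \<and> corresp (bv \<gamma> l m) \<nu>3 (psc t3 (m, -2)) \<and>
           \<tau> (Nsub (Ggrp \<alpha> \<beta> l m) #>\<^bsub>Gstruct (Ggrp \<alpha> \<beta> l m)\<^esub> rs1 \<alpha> \<beta>) = rs1 \<alpha> \<beta> \<circ> \<nu>1 \<and>
           \<tau> (Nsub (Ggrp \<alpha> \<beta> l m) #>\<^bsub>Gstruct (Ggrp \<alpha> \<beta> l m)\<^esub> rs2 l) = rs2 l \<circ> \<nu>2 \<and>
           \<tau> (Nsub (Ggrp \<alpha> \<beta> l m) #>\<^bsub>Gstruct (Ggrp \<alpha> \<beta> l m)\<^esub> rs3 m) = rs3 m \<circ> \<nu>3 \<and>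
           (4 - \<gamma>) * t1 + (l + 2) * t2 + (m + 2) * t3 = -1)"
    proof (intro allI impI)
      fix \<tau>
      assume H: "\<tau> \<in> hom (Gstruct (Ggrp \<alpha> \<beta> l m) Mod Nsub (Ggrp \<alpha> \<beta> l m)) (Gstruct (Ggrp \<alpha> \<beta> l m)) \<and>
          (\<forall>X \<in> carrier (Gstruct (Ggrp \<alpha> \<beta> l m) Mod Nsub (Ggrp \<alpha> \<beta> l m)).
             Nsub (Ggrp \<alpha> \<beta> l m) #>\<^bsub>Gstruct (Ggrp \<alpha> \<beta> l m)\<^esub> \<tau> X = X)"
      hence tau: "\<tau> \<in> hom (Gstruct (Ggrp \<alpha> \<beta> l m) Mod Nsub (Ggrp \<alpha> \<beta> l m)) (Gstruct (Ggrp \<alpha> \<beta> l m))"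
        and sec: "\<forall>X \<in> carrier (Gstruct (Ggrp \<alpha> \<beta> l m) Mod Nsub (Ggrp \<alpha> \<beta> l m)).
             Nsub (Ggrp \<alpha> \<beta> l m) #>\<^bsub>Gstruct (Ggrp \<alpha> \<beta> l m)\<^esub> \<tau> X = X" by blast+
      let ?G = "Ggrp \<alpha> \<beta> l m" and ?N = "Nsub (Ggrp \<alpha> \<beta> l m)"
      interpret nrm: normal ?N "Gstruct ?G" by (rule N_normal)
      obtain t1 \<nu>1 where N1: "\<nu>1 \<in> ?N" and n1: "\<forall>z. \<nu>1 z = z - (t1 * F1 \<alpha> \<beta> z) *s bv \<gamma> l m"
          and T1: "\<tau> (?N #>\<^bsub>Gstruct ?G\<^esub> rs1 \<alpha> \<beta>) = rs1 \<alpha> \<beta> \<circ> \<nu>1"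
        using st.tau_gen[where F="F1 \<alpha> \<beta>" and E="e 1 1", OF m2 tau sec _ linF1 _ st.Fb(1), folded rs1_refl,
            OF G_gens(1) Fe(1)] by blast
      obtain t2 \<nu>2 where N2: "\<nu>2 \<in> ?N" and n2: "\<forall>z. \<nu>2 z = z - (t2 * F2 l z) *s bv \<gamma> l m"
          and T2: "\<tau> (?N #>\<^bsub>Gstruct ?G\<^esub> rs2 l) = rs2 l \<circ> \<nu>2"
        using st.tau_gen[where F="F2 l" and E="e 2 1", OF m2 tau sec _ linF2 _ st.Fb(2), folded rs2_refl,
            OF G_gens(2) Fe(5)] by blast
      obtain t3 \<nu>3 where N3: "\<nu>3 \<in> ?N" and n3: "\<forall>z. \<nu>3 z = z - (t3 * F3 m z) *s bv \<gamma> l m"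
          and T3: "\<tau> (?N #>\<^bsub>Gstruct ?G\<^esub> rs3 m) = rs3 m \<circ> \<nu>3"
        using st.tau_gen[where F="F3 m" and E="e 3 1", OF m2 tau sec _ linF3 _ st.Fb(3), folded rs3_refl,
            OF G_gens(3) Fe(9)] by blast
      have C1: "corresp (bv \<gamma> l m) \<nu>1 (psc t1 (\<alpha>, \<beta>))" using st.corresp_c(1) n1 by blast
      have C2: "corresp (bv \<gamma> l m) \<nu>2 (psc t2 (-2, l))" using st.corresp_c(2) n2 by blast
      have C3: "corresp (bv \<gamma> l m) \<nu>3 (psc t3 (m, -2))" using st.corresp_c(3) n3 by blast
      have e1: "rs1 \<alpha> \<beta> \<circ> \<nu>1 = refl (F1 \<alpha> \<beta>) (Av \<gamma> l m 1 t1)" unfolding rs1_refl Av_def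
        using refl_comp_shift[OF linF1 st.Fb(1)] n1 by blast
      have e2: "rs2 l \<circ> \<nu>2 = refl (F2 l) (Av \<gamma> l m 2 t2)" unfolding rs2_refl Av_def
        using refl_comp_shift[OF linF2 st.Fb(2)] n2 by blast
      have e3: "rs3 m \<circ> \<nu>3 = refl (F3 m) (Av \<gamma> l m 3 t3)" unfolding rs3_refl Av_def
        using refl_comp_shift[OF linF3 st.Fb(3)] n3 by blast
      have gG: "rs1 \<alpha> \<beta> \<in> ?G" "rs2 l \<in> ?G" "rs3 m \<in> ?G" by (rule G_gens)+
      have tw: "\<tau> (?N #>\<^bsub>Gstruct ?G\<^esub> w) = id" if "w \<in> ?N" for w
      proof -
        have "?N #>\<^bsub>Gstruct ?G\<^esub> w = ?N" by (rule nrm.rcos_const[OF G_group that])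
        thus ?thesis using tau_facts(1)[OF tau] by simp
      qed
      note tm = tau_facts(2)[OF tau] tau_facts(3)[OF tau]
      have sumE: "(4 - \<gamma>) * t1 + (l + 2) * t2 + (m + 2) * t3 = -1"
      proof -
        have "even p \<or> even q \<or> even r" using assms(12) by auto
        thus ?thesis
        proof (elim disjE)
          assume "even r" then obtain r1 where r1: "r = 2 * r1" by (auto elim: evenE)
          have "\<tau> (?N #>\<^bsub>Gstruct ?G\<^esub> ((rs1 \<alpha> \<beta> \<circ> (rs2 l \<circ> rs3 m) ^^ r1) ^^ 2)) = id"
            by (rule tw[OF st.inN_R[OF g4 m2 g_eq o3(1) o3(3)[OF r1]]])
          hence "((refl (F1 \<alpha> \<beta>) (Av \<gamma> l m 1 t1) \<circ> (refl (F2 l) (Av \<gamma> l m 2 t2)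
            \<circ> refl (F3 m) (Av \<gamma> l m 3 t3)) ^^ r1) ^^ 2) = id"
            by (simp only: tm gG G_pow G_mul T1 T2 T3 e1 e2 e3)
          thus ?thesis using st.caseR[OF g4 m2 g_eq o3(1) o3(3)[OF r1]] by blast
        next
          assume "even q" then obtain q1 where q1: "q = 2 * q1" by (auto elim: evenE)
          have "\<tau> (?N #>\<^bsub>Gstruct ?G\<^esub> ((rs2 l \<circ> (rs3 m \<circ> rs1 \<alpha> \<beta>) ^^ q1) ^^ 2)) = id"
            by (rule tw[OF st.inN_Q[OF g4 l2 b4 b_eq o2(1) o2(3)[OF q1]]])
          hence "((refl (F2 l) (Av \<gamma> l m 2 t2) \<circ> (refl (F3 m) (Av \<gamma> l m 3 t3)
            \<circ> refl (F1 \<alpha> \<beta>) (Av \<gamma> l m 1 t1)) ^^ q1) ^^ 2) = id"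
            by (simp only: tm gG G_pow G_mul T1 T2 T3 e1 e2 e3)
          thus ?thesis using st.caseQ[OF g4 l2 b4 b_eq o2(1) o2(3)[OF q1]] by blast
        next
          assume "even p" then obtain p1 where p1: "p = 2 * p1" by (auto elim: evenE)
          have "\<tau> (?N #>\<^bsub>Gstruct ?G\<^esub> ((rs3 m \<circ> (rs1 \<alpha> \<beta> \<circ> rs2 l) ^^ p1) ^^ 2)) = id"
            by (rule tw[OF st.inN_P[OF g4 m2 a4 a_eq o1(1) o1(3)[OF p1]]])
          hence "((refl (F3 m) (Av \<gamma> l m 3 t3) \<circ> (refl (F1 \<alpha> \<beta>) (Av \<gamma> l m 1 t1)
            \<circ> refl (F2 l) (Av \<gamma> l m 2 t2)) ^^ p1) ^^ 2) = id"
            by (simp only: tm gG G_pow G_mul T1 T2 T3 e1 e2 e3)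
          thus ?thesis using st.caseP[OF g4 m2 a4 a_eq o1(1) o1(3)[OF p1]] by blast
        qed
      qed
      show "\<exists>t1 t2 t3 \<nu>1 \<nu>2 \<nu>3.
           \<nu>1 \<in> ?N \<and> corresp (bv \<gamma> l m) \<nu>1 (psc t1 (\<alpha>, \<beta>)) \<and>
           \<nu>2 \<in> ?N \<and> corresp (bv \<gamma> l m) \<nu>2 (psc t2 (-2, l)) \<and>
           \<nu>3 \<in> ?N \<and> corresp (bv \<gamma> l m) \<nu>3 (psc t3 (m, -2)) \<and>
           \<tau> (?N #>\<^bsub>Gstruct ?G\<^esub> rs1 \<alpha> \<beta>) = rs1 \<alpha> \<beta> \<circ> \<nu>1 \<and>
           \<tau> (?N #>\<^bsub>Gstruct ?G\<^esub> rs2 l) = rs2 l \<circ> \<nu>2 \<and>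
           \<tau> (?N #>\<^bsub>Gstruct ?G\<^esub> rs3 m) = rs3 m \<circ> \<nu>3 \<and>
           (4 - \<gamma>) * t1 + (l + 2) * t2 + (m + 2) * t3 = -1"
        using N1 N2 N3 C1 C2 C3 T1 T2 T3 sumE by blast
    qed
  qed
qed


end
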